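(* Let $A$ be a local commutative ring, $E$ a non-zero $A$-module and $R=A\propto E$ the trivial ring extension of $A$ by $E$. Then $R$ is Gaussian if and only if $A$ is Gaussian and $aE=a^2E$ for each $a\in A$.
   Context: All rings are commutative with identity. The trivial ring extension $R=A\propto E$ is the ring with underlying additive group $A\times E$ and multiplication $(a,e)(a',e')=(aa',ae'+a'e)$. For $f\in R[X]$, the content $c(f)$ is the ideal generated by the coefficients of $f$; $R$ is Gaussian if $c(fg)=c(f)c(g)$ for all $f,g\in R[X]$. *)

theory Defs
  imports "HOL-Algebra.Module" "HOL-Algebra.Ideal_Product" "HOL-Algebra.Polynomials"
begin

definition local_ring :: "('a, 'b) ring_scheme \<Rightarrow> bool" where
  "local_ring R \<longleftrightarrow> cring R \<and> (\<exists>!M. maximalideal M R)"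

definition content :: "('a, 'b) ring_scheme \<Rightarrow> 'a list \<Rightarrow> 'a set" where
  "content R f = genideal R (set f)"

definition gaussian :: "('a, 'b) ring_scheme \<Rightarrow> bool" where
  "gaussian R \<longleftrightarrow>
     (\<forall>f \<in> carrier (univ_poly R (carrier R)). \<forall>g \<in> carrier (univ_poly R (carrier R)).
        content R (f \<otimes>\<^bsub>univ_poly R (carrier R)\<^esub> g) = content R f \<cdot>\<^bsub>R\<^esub> content R g)"

definition triv_ext :: "('a, 'c) ring_scheme \<Rightarrow> ('a, 'b) module \<Rightarrow> ('a \<times> 'b) ring" where
  "triv_ext A E = \<lparr> carrier = carrier A \<times> carrier E,
     monoid.mult = (\<lambda>x y. (fst x \<otimes>\<^bsub>A\<^esub> fst y,
                        (fst x \<odot>\<^bsub>E\<^esub> snd y) \<oplus>\<^bsub>E\<^esub> (fst y \<odot>\<^bsub>E\<^esub> snd x))),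
     one = (\<one>\<^bsub>A\<^esub>, \<zero>\<^bsub>E\<^esub>),
     zero = (\<zero>\<^bsub>A\<^esub>, \<zero>\<^bsub>E\<^esub>),
     add = (\<lambda>x y. (fst x \<oplus>\<^bsub>A\<^esub> fst y, snd x \<oplus>\<^bsub>E\<^esub> snd y)) \<rparr>"

definition smult_module :: "('a, 'b) module \<Rightarrow> 'a \<Rightarrow> 'b set" where
  "smult_module E a = (\<lambda>e. a \<odot>\<^bsub>E\<^esub> e) ` carrier E"

end

theory Submission
  imports Defs
begin


definition conv :: "('a,'b) ring_scheme \<Rightarrow> (nat \<Rightarrow> 'a) \<Rightarrow> (nat \<Rightarrow> 'a) \<Rightarrow> nat \<Rightarrow> 'a" where
  "conv R f g k = finsum R (\<lambda>i. f i \<otimes>\<^bsub>R\<^esub> g (k - i)) {..k}"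

definition fsupp :: "('a,'b) ring_scheme \<Rightarrow> (nat \<Rightarrow> 'a) \<Rightarrow> nat \<Rightarrow> bool" where
  "fsupp R f n \<longleftrightarrow> (\<forall>i. f i \<in> carrier R) \<and> (\<forall>i\<ge>n. f i = \<zero>\<^bsub>R\<^esub>)"

definition cont :: "('a,'b) ring_scheme \<Rightarrow> (nat \<Rightarrow> 'a) \<Rightarrow> 'a set" where
  "cont R f = genideal R (range f)"

context cring begin

lemma idealI_simple:
  assumes "I \<subseteq> carrier R" "\<zero> \<in> I" "\<And>a b. a \<in> I \<Longrightarrow> b \<in> I \<Longrightarrow> a \<oplus> b \<in> I"
    "\<And>a. a \<in> I \<Longrightarrow> \<ominus> a \<in> I" "\<And>a x. a \<in> I \<Longrightarrow> x \<in> carrier R \<Longrightarrow> x \<otimes> a \<in> I"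
  shows "ideal I R"
proof (rule idealI[OF ring_axioms])
  show "subgroup I (add_monoid R)"
    by (rule add.subgroupI) (use assms in \<open>auto simp: a_inv_def[symmetric]\<close>)
  show "\<And>a x. a \<in> I \<Longrightarrow> x \<in> carrier R \<Longrightarrow> x \<otimes> a \<in> I" by fact
  show "\<And>a x. a \<in> I \<Longrightarrow> x \<in> carrier R \<Longrightarrow> a \<otimes> x \<in> I"
    using assms(1,5) m_comm by (metis subsetD)
qed

lemma ideal_preimage_mult:
  assumes I: "ideal I R" and c: "c \<in> carrier R"
  shows "ideal {x \<in> carrier R. c \<otimes> x \<in> I} R"
proof (rule idealI_simple)
  interpret ideal I R by fact
  show "{x \<in> carrier R. c \<otimes> x \<in> I} \<subseteq> carrier R" by auto
  show "\<zero> \<in> {x \<in> carrier R. c \<otimes> x \<in> I}" using c by simp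
  show "a \<oplus> b \<in> {x \<in> carrier R. c \<otimes> x \<in> I}" if "a \<in> {x \<in> carrier R. c \<otimes> x \<in> I}" "b \<in> {x \<in> carrier R. c \<otimes> x \<in> I}" for a b
    using that c by (simp add: r_distr a_closed)
  show "\<ominus> a \<in> {x \<in> carrier R. c \<otimes> x \<in> I}" if "a \<in> {x \<in> carrier R. c \<otimes> x \<in> I}" for a
    using that c by (simp add: r_minus a_inv_closed)
  show "x \<otimes> a \<in> {x \<in> carrier R. c \<otimes> x \<in> I}" if "a \<in> {x \<in> carrier R. c \<otimes> x \<in> I}" "x \<in> carrier R" for a x
  proof -
    have "c \<otimes> (x \<otimes> a) = x \<otimes> (c \<otimes> a)" using that c m_lcomm by auto
    thus ?thesis using that I_l_closed by auto
  qed
qed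

lemma genideal_mult_mem:
  assumes XX: "XX \<subseteq> carrier R" and c: "c \<in> carrier R" and x: "x \<in> Idl XX"
  shows "c \<otimes> x \<in> Idl ((\<lambda>y. c \<otimes> y) ` XX)"
proof -
  have XX': "(\<lambda>y. c \<otimes> y) ` XX \<subseteq> carrier R" using XX c by auto
  have I: "ideal {x \<in> carrier R. c \<otimes> x \<in> Idl ((\<lambda>y. c \<otimes> y) ` XX)} R"
    by (rule ideal_preimage_mult[OF genideal_ideal[OF XX'] c])
  have "XX \<subseteq> {x \<in> carrier R. c \<otimes> x \<in> Idl ((\<lambda>y. c \<otimes> y) ` XX)}"
    using XX genideal_self[OF XX'] by auto
  hence "Idl XX \<subseteq> {x \<in> carrier R. c \<otimes> x \<in> Idl ((\<lambda>y. c \<otimes> y) ` XX)}"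
    by (rule genideal_minimal[OF I])
  thus ?thesis using x by auto
qed

lemma ideal_prod_genideal_subset:
  assumes XX: "XX \<subseteq> carrier R" and YY: "YY \<subseteq> carrier R" and I: "ideal I R"
    and prods: "\<And>x y. x \<in> XX \<Longrightarrow> y \<in> YY \<Longrightarrow> x \<otimes> y \<in> I"
  shows "(Idl XX) \<cdot> (Idl YY) \<subseteq> I"
proof -
  have step1: "i \<otimes> y \<in> I" if i: "i \<in> Idl XX" and y: "y \<in> YY" for i y
  proof -
    have yc: "y \<in> carrier R" using y YY by auto
    have J: "ideal {x \<in> carrier R. y \<otimes> x \<in> I} R" by (rule ideal_preimage_mult[OF I yc])
    have "XX \<subseteq> {x \<in> carrier R. y \<otimes> x \<in> I}" proof
      fix x assume x: "x \<in> XX"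
      have "x \<in> carrier R" using x XX by auto
      hence "y \<otimes> x = x \<otimes> y" using yc m_comm by simp
      thus "x \<in> {x \<in> carrier R. y \<otimes> x \<in> I}" using x XX prods[OF x y] by auto
    qed
    hence "Idl XX \<subseteq> {x \<in> carrier R. y \<otimes> x \<in> I}" by (rule genideal_minimal[OF J])
    hence "y \<otimes> i \<in> I" "i \<in> carrier R" using i by auto
    thus ?thesis using m_comm[OF yc \<open>i \<in> carrier R\<close>] by simp
  qed
  have step2: "i \<otimes> j \<in> I" if i: "i \<in> Idl XX" and j: "j \<in> Idl YY" for i j
  proof -
    have ic: "i \<in> carrier R" by (rule ideal.Icarr[OF genideal_ideal[OF XX] i])
    have J: "ideal {x \<in> carrier R. i \<otimes> x \<in> I} R" by (rule ideal_preimage_mult[OF I ic])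
    have "YY \<subseteq> {x \<in> carrier R. i \<otimes> x \<in> I}" using YY step1[OF i] by auto
    hence "Idl YY \<subseteq> {x \<in> carrier R. i \<otimes> x \<in> I}" by (rule genideal_minimal[OF J])
    thus ?thesis using j by auto
  qed
  show ?thesis
  proof
    fix s assume "s \<in> (Idl XX) \<cdot> (Idl YY)"
    thus "s \<in> I"
    proof (induct s rule: ideal_prod.induct)
      case (prod i j) thus ?case by (rule step2)
    next
      case (sum s1 s2) thus ?case using I by (simp add: additive_subgroup.a_closed ideal.axioms(1))
    qed
  qed
qed

lemma finsum_in_ideal:
  assumes I: "ideal I R" and A: "finite A" and h: "\<And>i. i \<in> A \<Longrightarrow> h i \<in> I"
  shows "finsum R h A \<in> I"
  using A h
proof (induct A rule: finite_induct)
  case empty thus ?case using I by (simp add: additive_subgroup.zero_closed ideal.axioms(1))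
next
  case (insert x F)
  interpret ideal I R by fact
  have hc: "h \<in> insert x F \<rightarrow> carrier R" using insert(4) Icarr by auto
  have "finsum R h (insert x F) = h x \<oplus> finsum R h F"
    using insert hc by (simp add: finsum_insert)
  thus ?case using insert by (simp add: a_closed)
qed

lemma conv_closed:
  assumes "\<And>i. f i \<in> carrier R" "\<And>i. g i \<in> carrier R"
  shows "conv R f g k \<in> carrier R"
  unfolding conv_def by (rule finsum_closed) (use assms in auto)

lemma cont_ideal: "(\<And>i. f i \<in> carrier R) \<Longrightarrow> ideal (cont R f) R"
  unfolding cont_def by (rule genideal_ideal) auto

lemma cont_mem: "(\<And>i. f i \<in> carrier R) \<Longrightarrow> f i \<in> cont R f"
  unfolding cont_def using genideal_self[of "range f"] by auto

lemma cont_conv_subset: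
  assumes f: "\<And>i. f i \<in> carrier R" and g: "\<And>i. g i \<in> carrier R"
  shows "cont R (conv R f g) \<subseteq> cont R f \<cdot> cont R g"
proof -
  have I: "ideal (cont R f \<cdot> cont R g) R"
    by (rule ideal_prod_is_ideal[OF cont_ideal cont_ideal]) (use f g in auto)
  have "range (conv R f g) \<subseteq> cont R f \<cdot> cont R g"
  proof
    fix x assume "x \<in> range (conv R f g)"
    then obtain k where x: "x = conv R f g k" by auto
    show "x \<in> cont R f \<cdot> cont R g" unfolding x conv_def
      by (rule finsum_in_ideal[OF I]) (simp, intro ideal_prod.prod cont_mem f g)
  qed
  thus ?thesis unfolding cont_def[of R "conv R f g"] by (rule genideal_minimal[OF I])
qed

lemma cont_mult:
  assumes f: "\<And>i. f i \<in> carrier R" and c: "c \<in> carrier R" and x: "x \<in> cont R f"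
  shows "c \<otimes> x \<in> cont R (\<lambda>i. c \<otimes> f i)"
proof -
  have "c \<otimes> x \<in> Idl ((\<lambda>y. c \<otimes> y) ` range f)"
    by (rule genideal_mult_mem) (use f c x in \<open>auto simp: cont_def\<close>)
  moreover have "(\<lambda>y. c \<otimes> y) ` range f = range (\<lambda>i. c \<otimes> f i)" by auto
  ultimately show ?thesis by (simp add: cont_def)
qed

end

context cring begin

lemma ideal_add_cancel:
  assumes I: "ideal I R" and x: "x \<in> carrier R" and y: "y \<in> I" and xy: "x \<oplus> y \<in> I"
  shows "x \<in> I"
proof -
  interpret ideal I R by fact
  have yc: "y \<in> carrier R" using y Icarr by blast
  have "x = (x \<oplus> y) \<oplus> \<ominus> y" using x yc by (simp add: a_assoc r_neg)
  also have "\<dots> \<in> I" by (rule a_closed[OF xy a_inv_closed[OF y]])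
  finally show ?thesis .
qed

lemma ideal_mem_zero: "ideal I R \<Longrightarrow> \<zero> \<in> I"
  by (simp add: additive_subgroup.zero_closed ideal.axioms(1))

lemma mccoy_top:
  assumes I: "ideal I R" and s: "\<And>i. s i \<in> carrier R" and P: "\<And>i. P i \<in> carrier R"
    and Pz: "\<And>i. i > n \<Longrightarrow> P i = \<zero>"
    and hyp: "\<And>j' i. j' > j \<Longrightarrow> s j' \<otimes> P i \<in> I"
    and cv: "conv R s P (j + n) \<in> I"
  shows "s j \<otimes> P n \<in> I"
proof -
  let ?t = "\<lambda>k. s k \<otimes> P (j + n - k)"
  have tc: "?t \<in> A \<rightarrow> carrier R" for A using s P by auto
  have rest: "finsum R ?t ({..j+n} - {j}) \<in> I"
  proof (rule finsum_in_ideal[OF I])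
    fix k assume k: "k \<in> {..j+n} - {j}"
    show "?t k \<in> I"
    proof (cases "k < j")
      case True
      hence "P (j + n - k) = \<zero>" using Pz by auto
      thus ?thesis using s[of k] ideal_mem_zero[OF I] by simp
    next
      case False
      hence "k > j" using k by auto
      thus ?thesis using hyp by blast
    qed
  qed simp
  have "conv R s P (j + n) = finsum R ?t (insert j ({..j+n} - {j}))"
    unfolding conv_def by (rule arg_cong[where f="finsum R ?t"]) auto
  also have "\<dots> = ?t j \<oplus> finsum R ?t ({..j+n} - {j})"
    by (rule finsum_insert) (use s P in auto)
  finally have "?t j \<oplus> finsum R ?t ({..j+n} - {j}) \<in> I" using cv by simp
  hence "?t j \<in> I" by (rule ideal_add_cancel[OF I _ rest, rotated]) (use s P in auto)
  thus ?thesis by simp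
qed

lemma mccoy_shift:
  assumes I: "ideal I R" and s: "\<And>i. s i \<in> carrier R" and P: "\<And>i. P i \<in> carrier R"
    and c: "c \<in> carrier R" and cP: "c \<otimes> P n \<in> I"
    and cv: "\<And>k. conv R s P k \<in> I"
  shows "conv R s (\<lambda>i. if i = n then \<zero> else c \<otimes> P i) k \<in> I"
proof -
  interpret ideal I R by fact
  let ?Q = "\<lambda>i. if i = n then \<zero> else c \<otimes> P i"
  let ?h = "\<lambda>i. if k - i = n then s i \<otimes> (c \<otimes> P n) else \<zero>"
  have Qc: "\<And>i. ?Q i \<in> carrier R" using c P by auto
  have hI: "\<And>i. ?h i \<in> I" using I_l_closed[OF cP s] ideal_mem_zero[OF I] by simp
  have hc: "\<And>i. ?h i \<in> carrier R" using hI Icarr by blast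
  have "c \<otimes> conv R s P k = finsum R (\<lambda>i. c \<otimes> (s i \<otimes> P (k - i))) {..k}"
    unfolding conv_def by (rule finsum_rdistr) (use c s P in auto)
  also have "\<dots> = finsum R (\<lambda>i. s i \<otimes> ?Q (k - i) \<oplus> ?h i) {..k}"
  proof (rule finsum_cong')
    show "(\<lambda>i. s i \<otimes> ?Q (k - i) \<oplus> ?h i) \<in> {..k} \<rightarrow> carrier R" using s Qc hc by auto
    fix i assume "i \<in> {..k}"
    show "c \<otimes> (s i \<otimes> P (k - i)) = s i \<otimes> ?Q (k - i) \<oplus> ?h i"
    proof (cases "k - i = n")
      case True
      have e1: "?Q (k - i) = \<zero>" "?h i = s i \<otimes> (c \<otimes> P n)" using True by auto
      have "c \<otimes> (s i \<otimes> P n) = s i \<otimes> \<zero> \<oplus> s i \<otimes> (c \<otimes> P n)"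
        using c s[of i] P[of n] by (simp add: m_lcomm)
      thus ?thesis using e1 True by simp
    next
      case False
      have e1: "?Q (k - i) = c \<otimes> P (k - i)" "?h i = \<zero>" using False by auto
      have "c \<otimes> (s i \<otimes> P (k - i)) = s i \<otimes> (c \<otimes> P (k - i)) \<oplus> \<zero>"
        using c s[of i] P[of "k - i"] by (simp add: m_lcomm)
      thus ?thesis using e1 by simp
    qed
  qed simp
  also have "\<dots> = conv R s ?Q k \<oplus> finsum R ?h {..k}"
    unfolding conv_def by (rule finsum_addf) (use s Qc hc in auto)
  finally have eq: "c \<otimes> conv R s P k = conv R s ?Q k \<oplus> finsum R ?h {..k}" .
  have m1: "c \<otimes> conv R s P k \<in> I" using cv c I_l_closed by blast
  have m2: "finsum R ?h {..k} \<in> I" by (rule finsum_in_ideal[OF I]) (use hI in auto)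
  have m3: "conv R s ?Q k \<in> carrier R" by (rule conv_closed[OF s Qc])
  show ?thesis
    by (rule ideal_add_cancel[OF I m3 m2]) (use m1 eq in simp)
qed

lemma mccoy_aux:
  assumes I: "ideal I R" and s: "\<And>i. s i \<in> carrier R" and sD: "\<And>i. i \<ge> D \<Longrightarrow> s i = \<zero>"
    and u: "s p \<in> Units R"
  shows "\<forall>P. (\<forall>i. P i \<in> carrier R) \<longrightarrow> (\<forall>i\<ge>n. P i = \<zero>) \<longrightarrow> (\<forall>k. conv R s P k \<in> I) \<longrightarrow> (\<forall>i. P i \<in> I)"
proof (induct n)
  case 0 thus ?case using ideal_mem_zero[OF I] by auto
next
  case (Suc n)
  note IH = Suc.hyps
  show ?case
  proof (intro allI impI)
    fix P i assume P: "\<forall>i. P i \<in> carrier R" and Pz: "\<forall>i\<ge>Suc n. P i = \<zero>" and cv: "\<forall>k. conv R s P k \<in> I"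
    have main: "\<forall>j. D \<le> j + m \<longrightarrow> (\<forall>i. s j \<otimes> P i \<in> I)" for m
    proof (induct m)
      case 0 thus ?case using sD P ideal_mem_zero[OF I] by simp
    next
      case (Suc m)
      show ?case
      proof (intro allI impI)
        fix j i assume j: "D \<le> j + Suc m"
        have hyp: "\<And>j' i. j' > j \<Longrightarrow> s j' \<otimes> P i \<in> I"
        proof -
          fix j' i assume "j' > j"
          hence "D \<le> j' + m" using j by simp
          thus "s j' \<otimes> P i \<in> I" using Suc.hyps by blast
        qed
        have top: "s j \<otimes> P n \<in> I"
          by (rule mccoy_top[OF I s, of P n j]) (use P Pz hyp cv in simp_all)
        have c1: "\<And>i. (if i = n then \<zero> else s j \<otimes> P i) \<in> carrier R" using s P by simp
        have c2: "\<And>i. i \<ge> n \<Longrightarrow> (if i = n then \<zero> else s j \<otimes> P i) = \<zero>" using Pz s by simp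
        have c3: "\<And>k. conv R s (\<lambda>i. if i = n then \<zero> else s j \<otimes> P i) k \<in> I"
            using mccoy_shift[OF I s, of P "s j" n] P s top cv by simp
        have Qi: "(if i = n then \<zero> else s j \<otimes> P i) \<in> I"
          by (rule IH[rule_format, OF c1 c2 c3])
        show "s j \<otimes> P i \<in> I"
        proof (cases "i = n")
          case True thus ?thesis using top by simp
        next
          case False thus ?thesis using Qi by simp
        qed
      qed
    qed
    have "s p \<otimes> P i \<in> I" using main[of D] by simp
    hence "inv (s p) \<otimes> (s p \<otimes> P i) \<in> I" by (rule ideal.I_l_closed[OF I]) (use u in simp)
    moreover have "inv (s p) \<otimes> (s p \<otimes> P i) = P i"
    proof -
      have "inv (s p) \<otimes> (s p \<otimes> P i) = (inv (s p) \<otimes> s p) \<otimes> P i"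
        using u P by (intro m_assoc[symmetric]) (auto simp: Units_closed)
      also have "\<dots> = P i" using u P by simp
      finally show ?thesis .
    qed
    ultimately show "P i \<in> I" by simp
  qed
qed

lemma mccoy:
  assumes s: "\<And>i. s i \<in> carrier R" and sD: "\<And>i. i \<ge> D \<Longrightarrow> s i = \<zero>"
    and u: "s p \<in> Units R"
    and g: "\<And>i. g i \<in> carrier R" and gn: "\<And>i. i \<ge> n \<Longrightarrow> g i = \<zero>"
  shows "g i \<in> cont R (conv R s g)"
proof -
  have I: "ideal (cont R (conv R s g)) R" by (rule cont_ideal) (rule conv_closed[OF s g])
  show ?thesis
  proof (rule mccoy_aux[of "cont R (conv R s g)" s D p n, OF I s sD u, rule_format])
    show "\<And>i. g i \<in> carrier R" using g by simp
    show "\<And>i. n \<le> i \<Longrightarrow> g i = \<zero>" using gn by simp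
    show "\<And>k. conv R s g k \<in> cont R (conv R s g)" using cont_mem[of "conv R s g", OF conv_closed[OF s g]] by simp
  qed
qed

end


definition gauss_coeff :: "('a,'b) ring_scheme \<Rightarrow> bool" where
  "gauss_coeff R \<longleftrightarrow> (\<forall>f g n m. fsupp R f n \<longrightarrow> fsupp R g m \<longrightarrow>
      cont R (conv R f g) = cont R f \<cdot>\<^bsub>R\<^esub> cont R g)"

context cring begin

lemma coeff_map_rev:
  assumes "\<And>i. i \<ge> n \<Longrightarrow> f i = \<zero>"
  shows "coeff (map f (rev [0..<n])) = f"
proof
  fix i show "coeff (map f (rev [0..<n])) i = f i"
  proof (cases "i < n")
    case True
    hence "coeff (map f (rev [0..<n])) i = (map f (rev [0..<n])) ! (n - 1 - i)"
      by (simp add: coeff_nth)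
    also have "\<dots> = f i" using True by (simp add: rev_nth)
    finally show ?thesis .
  next
    case False thus ?thesis using coeff_length[of "map f (rev [0..<n])" i] assms by simp
  qed
qed

lemma content_eq_cont:
  assumes "set p \<subseteq> carrier R"
  shows "content R p = cont R (coeff p)"
proof -
  have I1: "ideal (Idl (set p)) R" by (rule genideal_ideal[OF assms])
  have I2: "ideal (Idl (range (coeff p))) R" by (rule genideal_ideal) (use assms in auto)
  have "set p \<subseteq> range (coeff p)" using coeff_img_restrict[of p] by auto
  moreover have rc: "range (coeff p) \<subseteq> carrier R" using assms by auto
  ultimately have "Idl (set p) \<subseteq> Idl (range (coeff p))"
    using genideal_self[OF rc] by (intro genideal_minimal[OF I2]) auto
  moreover have "range (coeff p) \<subseteq> Idl (set p)"
  proof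
    fix x assume "x \<in> range (coeff p)"
    then obtain i where x: "x = coeff p i" by auto
    show "x \<in> Idl (set p)"
    proof (cases "i < length p")
      case True
      hence "x \<in> set p" using coeff_img_restrict[of p] x by auto
      thus ?thesis using genideal_self[OF assms] by auto
    next
      case False thus ?thesis using x coeff_length[of p i] ideal_mem_zero[OF I1] by simp
    qed
  qed
  hence "Idl (range (coeff p)) \<subseteq> Idl (set p)" by (rule genideal_minimal[OF I1])
  ultimately show ?thesis unfolding content_def cont_def by auto
qed

lemma conv_coeff:
  assumes "set p \<subseteq> carrier R" "set q \<subseteq> carrier R"
  shows "coeff (poly_mult p q) = conv R (coeff p) (coeff q)"
  unfolding conv_def using poly_mult_coeff[OF assms] by simp

lemma gaussian_iff_coeff: "gaussian R \<longleftrightarrow> gauss_coeff R"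
proof
  assume G: "gaussian R"
  show "gauss_coeff R" unfolding gauss_coeff_def
  proof (intro allI impI)
    fix f g n m assume f: "fsupp R f n" and g: "fsupp R g m"
    define l1 where "l1 = map f (rev [0..<n])"
    define l2 where "l2 = map g (rev [0..<m])"
    have s1: "set l1 \<subseteq> carrier R" using f by (auto simp: l1_def fsupp_def)
    have s2: "set l2 \<subseteq> carrier R" using g by (auto simp: l2_def fsupp_def)
    have c1: "coeff (normalize l1) = f" using coeff_map_rev[of n f] f
      by (simp add: l1_def fsupp_def normalize_coeff[symmetric])
    have c2: "coeff (normalize l2) = g" using coeff_map_rev[of m g] g
      by (simp add: l2_def fsupp_def normalize_coeff[symmetric])
    have p1: "normalize l1 \<in> carrier (univ_poly R (carrier R))"
      using normalize_gives_polynomial[OF s1] univ_poly_carrier by blast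
    have p2: "normalize l2 \<in> carrier (univ_poly R (carrier R))"
      using normalize_gives_polynomial[OF s2] univ_poly_carrier by blast
    have sn1: "set (normalize l1) \<subseteq> carrier R" using normalize_in_carrier[OF s1] .
    have sn2: "set (normalize l2) \<subseteq> carrier R" using normalize_in_carrier[OF s2] .
    have "content R (poly_mult (normalize l1) (normalize l2)) = content R (normalize l1) \<cdot> content R (normalize l2)"
      using G p1 p2 unfolding gaussian_def univ_poly_mult by blast
    moreover have "content R (poly_mult (normalize l1) (normalize l2)) = cont R (conv R f g)"
      using content_eq_cont[OF poly_mult_in_carrier[OF sn1 sn2]] conv_coeff[OF sn1 sn2] c1 c2 by simp
    ultimately show "cont R (conv R f g) = cont R f \<cdot> cont R g"
      using content_eq_cont[OF sn1] content_eq_cont[OF sn2] c1 c2 by simp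
  qed
next
  assume G: "gauss_coeff R"
  show "gaussian R" unfolding gaussian_def
  proof (intro ballI)
    fix p q assume p: "p \<in> carrier (univ_poly R (carrier R))" and q: "q \<in> carrier (univ_poly R (carrier R))"
    have sp: "set p \<subseteq> carrier R" using p univ_poly_carrier polynomial_incl by blast
    have sq: "set q \<subseteq> carrier R" using q univ_poly_carrier polynomial_incl by blast
    have f: "fsupp R (coeff p) (length p)" using sp coeff_length by (auto simp: fsupp_def)
    have g: "fsupp R (coeff q) (length q)" using sq coeff_length by (auto simp: fsupp_def)
    have "cont R (conv R (coeff p) (coeff q)) = cont R (coeff p) \<cdot> cont R (coeff q)"
      using G f g unfolding gauss_coeff_def by blast
    thus "content R (p \<otimes>\<^bsub>univ_poly R (carrier R)\<^esub> q) = content R p \<cdot> content R q"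
      unfolding univ_poly_mult
      using content_eq_cont[OF poly_mult_in_carrier[OF sp sq]] conv_coeff[OF sp sq]
        content_eq_cont[OF sp] content_eq_cont[OF sq] by simp
  qed
qed

end


context cring begin

lemma unit_of_inv: "x \<in> carrier R \<Longrightarrow> r \<in> carrier R \<Longrightarrow> r \<otimes> x = \<one> \<Longrightarrow> x \<in> Units R"
  unfolding Units_def using m_comm by auto

lemma exists_maximal_containing:
  assumes x: "x \<in> carrier R" and nu: "x \<notin> Units R"
  shows "\<exists>M. maximalideal M R \<and> x \<in> M"
proof -
  define S where "S = {J. ideal J R \<and> PIdl x \<subseteq> J \<and> \<one> \<notin> J}"
  have PI: "ideal (PIdl x) R" by (rule cgenideal_ideal[OF x])
  have one_not: "\<one> \<notin> PIdl x"
  proof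
    assume "\<one> \<in> PIdl x"
    then obtain r where r: "r \<in> carrier R" "\<one> = r \<otimes> x" unfolding cgenideal_def by auto
    hence "x \<in> Units R" using unit_of_inv[OF x r(1)] by simp
    thus False using nu by simp
  qed
  have Sne: "S \<noteq> {}" using PI one_not unfolding S_def by auto
  have "\<exists>M\<in>S. \<forall>J\<in>S. M \<subseteq> J \<longrightarrow> J = M"
  proof (rule subset_Zorn_nonempty[OF Sne])
    fix C assume C: "C \<noteq> {}" "subset.chain S C"
    have ch: "subset.chain {I. ideal I R} C" using C(2) unfolding pred_on.chain_def S_def by auto
    have "ideal (\<Union>C) R" using chain_Union_is_ideal[OF ch] C(1) by simp
    moreover have "PIdl x \<subseteq> \<Union>C"
    proof -
      obtain J where "J \<in> C" using C(1) by blast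
      hence "PIdl x \<subseteq> J" using C(2) unfolding pred_on.chain_def S_def by auto
      thus ?thesis using \<open>J \<in> C\<close> by blast
    qed
    moreover have "\<one> \<notin> \<Union>C" using C(2) unfolding pred_on.chain_def S_def by auto
    ultimately show "\<Union>C \<in> S" unfolding S_def by simp
  qed
  then obtain M where M: "M \<in> S" "\<And>J. J \<in> S \<Longrightarrow> M \<subseteq> J \<Longrightarrow> J = M" by blast
  have MI: "ideal M R" and xM: "x \<in> M" and oM: "\<one> \<notin> M"
    using M(1) cgenideal_self[OF x] unfolding S_def by auto
  have "maximalideal M R"
  proof (rule maximalidealI[OF MI])
    show "carrier R \<noteq> M" using oM by auto
    fix J assume J: "ideal J R" "M \<subseteq> J" "J \<subseteq> carrier R"
    show "J = M \<or> J = carrier R"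
    proof (cases "\<one> \<in> J")
      case True thus ?thesis using ideal.one_imp_carrier[OF J(1)] by simp
    next
      case False
      hence "J \<in> S" using J M(1) unfolding S_def by auto
      thus ?thesis using M(2) J(2) by simp
    qed
  qed
  thus ?thesis using xM by blast
qed

lemma local_units:
  assumes L: "\<exists>!M. maximalideal M R" and x: "x \<in> carrier R"
  shows "x \<in> Units R \<or> \<one> \<ominus> x \<in> Units R"
proof (rule ccontr)
  assume "\<not> ?thesis"
  hence n1: "x \<notin> Units R" and n2: "\<one> \<ominus> x \<notin> Units R" by auto
  obtain M1 where M1: "maximalideal M1 R" "x \<in> M1" using exists_maximal_containing[OF x n1] by blast
  obtain M2 where M2: "maximalideal M2 R" "\<one> \<ominus> x \<in> M2" using exists_maximal_containing[OF _ n2] x by auto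
  have "M1 = M2" using L M1(1) M2(1) by blast
  hence "x \<oplus> (\<one> \<ominus> x) \<in> M1" using M1 M2
    by (meson additive_subgroup.a_closed ideal.axioms(1) maximalideal.axioms(1))
  moreover have "x \<oplus> (\<one> \<ominus> x) = \<one>" using x by algebra
  ultimately have "\<one> \<in> M1" by simp
  hence "M1 = carrier R" using ideal.one_imp_carrier M1(1) maximalideal.axioms(1) by blast
  thus False using M1(1) maximalideal.I_notcarr by metis
qed

lemma local_sum_unit:
  assumes L: "\<exists>!M. maximalideal M R" and x: "x \<in> carrier R" and y: "y \<in> carrier R"
    and u: "x \<oplus> y \<in> Units R"
  shows "x \<in> Units R \<or> y \<in> Units R"
proof -
  let ?w = "inv (x \<oplus> y)"
  have w: "?w \<in> carrier R" using u by simp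
  have A: "x \<otimes> ?w \<in> Units R \<or> \<one> \<ominus> x \<otimes> ?w \<in> Units R" using local_units[OF L] x w by simp
  have B: "\<one> \<ominus> x \<otimes> ?w = y \<otimes> ?w"
  proof -
    have "(x \<oplus> y) \<otimes> ?w = \<one>" using u by simp
    hence h: "x \<otimes> ?w \<oplus> y \<otimes> ?w = \<one>" using x y w by (simp add: l_distr)
    have "\<one> \<ominus> x \<otimes> ?w = (x \<otimes> ?w \<oplus> y \<otimes> ?w) \<ominus> x \<otimes> ?w" by (simp add: h)
    also have "\<dots> = y \<otimes> ?w" using x y w by algebra
    finally show ?thesis .
  qed
  have C: "z \<otimes> ?w \<in> Units R \<Longrightarrow> z \<in> carrier R \<Longrightarrow> z \<in> Units R" for z
  proof -
    assume zw: "z \<otimes> ?w \<in> Units R" and z: "z \<in> carrier R"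
    have e: "(inv (z \<otimes> ?w) \<otimes> ?w) \<otimes> z = \<one>"
      using zw z w by (simp add: m_assoc m_comm[of z ?w])
    have c: "inv (z \<otimes> ?w) \<otimes> ?w \<in> carrier R" using zw w by simp
    show "z \<in> Units R" by (rule unit_of_inv[OF z c e])
  qed
  from A show ?thesis
  proof
    assume "x \<otimes> ?w \<in> Units R" thus ?thesis using C[OF _ x] by simp
  next
    assume "\<one> \<ominus> x \<otimes> ?w \<in> Units R" thus ?thesis using C[OF _ y] B by simp
  qed
qed

end


definition lin :: "('a,'b) ring_scheme \<Rightarrow> 'a \<Rightarrow> 'a \<Rightarrow> nat \<Rightarrow> 'a" where
  "lin R a b i = (if i = 0 then a else if i = Suc 0 then b else \<zero>\<^bsub>R\<^esub>)"

definition domi :: "('a,'b) ring_scheme \<Rightarrow> 'a \<Rightarrow> 'a \<Rightarrow> bool" where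
  "domi R a b \<longleftrightarrow> b \<otimes>\<^bsub>R\<^esub> b \<in> PIdl\<^bsub>R\<^esub> (a \<otimes>\<^bsub>R\<^esub> a) \<and> a \<otimes>\<^bsub>R\<^esub> b \<in> PIdl\<^bsub>R\<^esub> (a \<otimes>\<^bsub>R\<^esub> a)"

context cring begin

lemma lin_closed: "a \<in> carrier R \<Longrightarrow> b \<in> carrier R \<Longrightarrow> lin R a b i \<in> carrier R"
  by (simp add: lin_def)

lemma lin_fsupp: "a \<in> carrier R \<Longrightarrow> b \<in> carrier R \<Longrightarrow> fsupp R (lin R a b) 2"
  by (auto simp: fsupp_def lin_def)

lemma conv_lin:
  assumes c: "a \<in> carrier R" "b \<in> carrier R" "x \<in> carrier R" "y \<in> carrier R"
  shows "conv R (lin R a b) (lin R x y) k =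
     (if k = 0 then a \<otimes> x else if k = 1 then a \<otimes> y \<oplus> b \<otimes> x else if k = 2 then b \<otimes> y else \<zero>)"
proof -
  let ?f = "\<lambda>k i. lin R a b i \<otimes> lin R x y (k - i)"
  have fc: "\<And>k. ?f k \<in> A \<rightarrow> carrier R" for A using c lin_closed by auto
  consider "k = 0" | "k = 1" | "k = 2" | "k \<ge> 3" by linarith
  thus ?thesis
  proof cases
    case 1 thus ?thesis unfolding conv_def using c by (simp add: lin_def)
  next
    case 2
    have "finsum R (?f 1) {..Suc 0} = ?f 1 (Suc 0) \<oplus> finsum R (?f 1) {..0}"
      by (rule finsum_Suc) (use fc in auto)
    also have "\<dots> = b \<otimes> x \<oplus> a \<otimes> y" using c by (simp add: lin_def)
    also have "\<dots> = a \<otimes> y \<oplus> b \<otimes> x" using c by (simp add: a_comm)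
    finally show ?thesis using 2 unfolding conv_def by simp
  next
    case 3
    let ?g = "?f (Suc (Suc 0))"
    have "finsum R ?g {..Suc (Suc 0)} = ?g (Suc (Suc 0)) \<oplus> finsum R ?g {..Suc 0}"
      by (rule finsum_Suc) (use fc in auto)
    also have "finsum R ?g {..Suc 0} = ?g (Suc 0) \<oplus> finsum R ?g {..0}"
      by (rule finsum_Suc) (use fc in auto)
    also have "?g (Suc (Suc 0)) \<oplus> (?g (Suc 0) \<oplus> finsum R ?g {..0}) = b \<otimes> y" using c by (simp add: lin_def)
    finally show ?thesis using 3 unfolding conv_def by (simp add: numeral_2_eq_2)
  next
    case 4
    have "finsum R (?f k) {..k} = finsum R (\<lambda>i. \<zero>) {..k}"
    proof (rule finsum_cong')
      fix i assume "i \<in> {..k}"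
      show "?f k i = \<zero>" using 4 c lin_closed by (cases "i \<le> 1") (auto simp: lin_def)
    qed auto
    thus ?thesis using 4 unfolding conv_def by simp
  qed
qed

end

locale gcr = cring +
  assumes G: "gauss_coeff R"
begin

lemma lin_gauss:
  assumes c: "a \<in> carrier R" "b \<in> carrier R" "x \<in> carrier R" "y \<in> carrier R"
    and J: "ideal J R" and j1: "a \<otimes> x \<in> J" and j2: "a \<otimes> y \<oplus> b \<otimes> x \<in> J" and j3: "b \<otimes> y \<in> J"
    and u: "u \<in> {a, b}" and v: "v \<in> {x, y}"
  shows "u \<otimes> v \<in> J"
proof -
  have "range (conv R (lin R a b) (lin R x y)) \<subseteq> J"
    using conv_lin[OF c] j1 j2 j3 ideal_mem_zero[OF J] by auto
  hence sub: "cont R (conv R (lin R a b) (lin R x y)) \<subseteq> J"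
    unfolding cont_def by (rule genideal_minimal[OF J])
  have eq: "cont R (conv R (lin R a b) (lin R x y)) = cont R (lin R a b) \<cdot> cont R (lin R x y)"
    using G lin_fsupp c unfolding gauss_coeff_def by blast
  have "u \<in> cont R (lin R a b)"
  proof -
    have "u \<in> range (lin R a b)" using u by (auto simp: lin_def intro: range_eqI[of _ _ 0] range_eqI[of _ _ 1])
    thus ?thesis unfolding cont_def using genideal_self[of "range (lin R a b)"] c lin_closed by auto
  qed
  moreover have "v \<in> cont R (lin R x y)"
  proof -
    have "v \<in> range (lin R x y)" using v by (auto simp: lin_def intro: range_eqI[of _ _ 0] range_eqI[of _ _ 1])
    thus ?thesis unfolding cont_def using genideal_self[of "range (lin R x y)"] c lin_closed by auto
  qed
  ultimately have "u \<otimes> v \<in> cont R (lin R a b) \<cdot> cont R (lin R x y)" by (rule ideal_prod.prod)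
  thus ?thesis using eq sub by auto
qed

end

locale gloc = gcr +
  assumes L: "\<exists>!M. maximalideal M R"



context cring begin

lemma pidl_I: "r \<in> carrier R \<Longrightarrow> x = r \<otimes> c \<Longrightarrow> x \<in> PIdl c"
  unfolding cgenideal_def by auto

lemma pidl_E: "x \<in> PIdl c \<Longrightarrow> \<exists>r\<in>carrier R. x = r \<otimes> c"
  unfolding cgenideal_def by auto

definition pid2 :: "'a \<Rightarrow> 'a \<Rightarrow> 'a set" where
  "pid2 u v = {r \<otimes> u \<oplus> s \<otimes> v | r s. r \<in> carrier R \<and> s \<in> carrier R}"

lemma pid2_ideal:
  assumes u: "u \<in> carrier R" and v: "v \<in> carrier R"
  shows "ideal (pid2 u v) R"
proof (rule idealI_simple)
  show "pid2 u v \<subseteq> carrier R" using u v unfolding pid2_def by auto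
  show "\<zero> \<in> pid2 u v" unfolding pid2_def using u v by (auto intro!: exI[of _ \<zero>])
  fix a b assume a: "a \<in> pid2 u v"
  then obtain r s where rs: "r \<in> carrier R" "s \<in> carrier R" "a = r \<otimes> u \<oplus> s \<otimes> v" unfolding pid2_def by auto
  {
    assume "b \<in> pid2 u v"
    then obtain r' s' where rs': "r' \<in> carrier R" "s' \<in> carrier R" "b = r' \<otimes> u \<oplus> s' \<otimes> v" unfolding pid2_def by auto
    have "a \<oplus> b = (r \<oplus> r') \<otimes> u \<oplus> (s \<oplus> s') \<otimes> v" using rs rs' u v by algebra
    thus "a \<oplus> b \<in> pid2 u v" unfolding pid2_def using rs rs' by blast
  }
  have "\<ominus> a = (\<ominus> r) \<otimes> u \<oplus> (\<ominus> s) \<otimes> v" using rs u v by algebra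
  thus "\<ominus> a \<in> pid2 u v" unfolding pid2_def using rs by blast
  fix x assume x: "x \<in> carrier R"
  have "x \<otimes> a = (x \<otimes> r) \<otimes> u \<oplus> (x \<otimes> s) \<otimes> v" using rs u v x by algebra
  thus "x \<otimes> a \<in> pid2 u v" unfolding pid2_def using rs x by blast
qed

lemma unit_factor:
  assumes c: "c \<in> carrier R" and z: "z \<in> carrier R" and u: "c \<otimes> z \<in> Units R"
  shows "z \<in> Units R"
proof -
  have e: "(inv (c \<otimes> z) \<otimes> c) \<otimes> z = \<one>" using u c z by (simp add: m_assoc)
  have "inv (c \<otimes> z) \<otimes> c \<in> carrier R" using u c by simp
  thus ?thesis using unit_of_inv[OF z _ e] by simp
qed

lemma inv_cancel: "t \<in> Units R \<Longrightarrow> x \<in> carrier R \<Longrightarrow> inv t \<otimes> (t \<otimes> x) = x"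
proof -
  assume t: "t \<in> Units R" and x: "x \<in> carrier R"
  have "inv t \<otimes> (t \<otimes> x) = (inv t \<otimes> t) \<otimes> x" by (rule m_assoc[symmetric]) (use t x in auto)
  thus ?thesis using t x by simp
qed

lemma unit_cancel:
  assumes t: "t \<in> Units R" and x: "x \<in> carrier R" and e: "t \<otimes> x = \<zero>"
  shows "x = \<zero>"
proof -
  have "x = inv t \<otimes> (t \<otimes> x)" using inv_cancel[OF t x] by simp
  thus ?thesis using e t by simp
qed

lemma unit_solve:
  assumes t: "t \<in> Units R" and x: "x \<in> carrier R" and y: "y \<in> carrier R" and e: "y = t \<otimes> x"
  shows "x = inv t \<otimes> y"
  using inv_cancel[OF t x] e by simp

end

context gloc begin

lemma T2:
  assumes a: "a \<in> carrier R" and n: "n \<in> carrier R" and an: "a \<otimes> n = \<zero>"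
    and nn: "n \<otimes> n \<in> PIdl (a \<otimes> a)"
  shows "n \<otimes> n = \<zero>"
proof -
  obtain \<rho> where \<rho>: "\<rho> \<in> carrier R" "n \<otimes> n = \<rho> \<otimes> (a \<otimes> a)" using pidl_E[OF nn] by blast
  have y: "\<ominus> (\<rho> \<otimes> a) \<in> carrier R" using \<rho> a by simp
  have j2: "a \<otimes> \<ominus> (\<rho> \<otimes> a) \<oplus> n \<otimes> n = \<zero>"
  proof -
    have "a \<otimes> \<ominus> (\<rho> \<otimes> a) \<oplus> \<rho> \<otimes> (a \<otimes> a) = \<zero>" using a \<rho> by algebra
    thus ?thesis using \<rho> by simp
  qed
  have j3: "n \<otimes> \<ominus> (\<rho> \<otimes> a) = \<zero>"
  proof -
    have "n \<otimes> \<ominus> (\<rho> \<otimes> a) = \<ominus> (\<rho> \<otimes> (a \<otimes> n))" using a n \<rho> by algebra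
    thus ?thesis using an \<rho> by simp
  qed
  have "n \<otimes> n \<in> {\<zero>}"
    by (rule lin_gauss[OF a n n y zeroideal]) (use an j2 j3 in auto)
  thus ?thesis by simp
qed

lemma ab0:
  assumes a: "a \<in> carrier R" and b: "b \<in> carrier R" and ab: "a \<otimes> b = \<zero>"
  shows "b \<otimes> b \<in> PIdl (a \<otimes> a) \<or> a \<otimes> a \<in> PIdl (b \<otimes> b)"
proof -
  let ?S = "a \<otimes> a \<oplus> b \<otimes> b"
  have Sc: "?S \<in> carrier R" using a b by simp
  have J: "ideal (PIdl ?S) R" by (rule cgenideal_ideal[OF Sc])
  have ba: "b \<otimes> a = \<zero>" using ab a b m_comm by metis
  have j: "a \<otimes> b \<in> PIdl ?S" "a \<otimes> a \<oplus> b \<otimes> b \<in> PIdl ?S" "b \<otimes> a \<in> PIdl ?S"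
    using ab ba ideal_mem_zero[OF J] cgenideal_self[OF Sc] by auto
  have "a \<otimes> a \<in> PIdl ?S" by (rule lin_gauss[OF a b b a J j]) auto
  then obtain x where x: "x \<in> carrier R" "a \<otimes> a = x \<otimes> ?S" using pidl_E by blast
  have "b \<otimes> b \<in> PIdl ?S" by (rule lin_gauss[OF a b b a J j]) auto
  then obtain y where y: "y \<in> carrier R" "b \<otimes> b = y \<otimes> ?S" using pidl_E by blast
  show ?thesis
  proof (cases "x \<in> Units R")
    case True
    have "?S = inv x \<otimes> (a \<otimes> a)" by (rule unit_solve[OF True Sc _ x(2)]) (use a in simp)
    hence "b \<otimes> b = (y \<otimes> inv x) \<otimes> (a \<otimes> a)" using y True a by (simp add: m_assoc)
    thus ?thesis using y True by (intro disjI1 pidl_I[of "y \<otimes> inv x"]) auto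
  next
    case xn: False
    show ?thesis
    proof (cases "y \<in> Units R")
      case True
      have "?S = inv y \<otimes> (b \<otimes> b)" by (rule unit_solve[OF True Sc _ y(2)]) (use b in simp)
      hence "a \<otimes> a = (x \<otimes> inv y) \<otimes> (b \<otimes> b)" using x True b by (simp add: m_assoc)
      thus ?thesis using x True by (intro disjI2 pidl_I[of "x \<otimes> inv y"]) auto
    next
      case yn: False
      have "x \<oplus> y \<notin> Units R" using local_sum_unit[OF L x(1) y(1)] xn yn by blast
      hence t: "\<one> \<ominus> (x \<oplus> y) \<in> Units R" using local_units[OF L] x y by blast
      have "(\<one> \<ominus> (x \<oplus> y)) \<otimes> ?S = ?S \<ominus> (x \<otimes> ?S \<oplus> y \<otimes> ?S)" using x(1) y(1) a b by algebra
      also have "x \<otimes> ?S \<oplus> y \<otimes> ?S = ?S" by (simp only: x(2)[symmetric] y(2)[symmetric])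
      also have "?S \<ominus> ?S = \<zero>" using Sc by (simp add: r_neg minus_eq)
      finally have "?S = \<zero>" using unit_cancel[OF t Sc] by simp
      hence "b \<otimes> b = \<zero> \<otimes> (a \<otimes> a)" using y a by simp
      thus ?thesis using pidl_I[of \<zero>] by auto
    qed
  qed
qed

end


context gloc begin

lemma dom_from_sq:
  assumes a: "a \<in> carrier R" and b: "b \<in> carrier R" and w: "w \<in> carrier R"
    and abw: "a \<otimes> b = w \<otimes> (a \<otimes> a)"
    and sq: "(b \<ominus> w \<otimes> a) \<otimes> (b \<ominus> w \<otimes> a) \<in> PIdl (a \<otimes> a)"
  shows "domi R a b"
proof -
  let ?b' = "b \<ominus> w \<otimes> a"
  obtain z where z: "z \<in> carrier R" "?b' \<otimes> ?b' = z \<otimes> (a \<otimes> a)" using pidl_E[OF sq] by blast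
  have ab': "a \<otimes> ?b' = \<zero>"
  proof -
    have "a \<otimes> ?b' = a \<otimes> b \<ominus> w \<otimes> (a \<otimes> a)" using a b w by algebra
    thus ?thesis using abw a w by (simp add: r_neg minus_eq)
  qed
  have "b \<otimes> b = ?b' \<otimes> ?b' \<oplus> (w \<otimes> w) \<otimes> (a \<otimes> a) \<oplus> ((\<one> \<oplus> \<one>) \<otimes> w) \<otimes> (a \<otimes> ?b')"
    using a b w by algebra
  also have "\<dots> = (z \<oplus> w \<otimes> w) \<otimes> (a \<otimes> a)" using ab' z a w by (simp add: l_distr)
  finally have "b \<otimes> b \<in> PIdl (a \<otimes> a)" using z w by (intro pidl_I[of "z \<oplus> w \<otimes> w"]) auto
  moreover have "a \<otimes> b \<in> PIdl (a \<otimes> a)" using abw w by (intro pidl_I) auto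
  ultimately show ?thesis unfolding domi_def by simp
qed

lemma T1_half:
  assumes a: "a \<in> carrier R" and b: "b \<in> carrier R" and abI: "a \<otimes> b \<in> PIdl (a \<otimes> a)"
  shows "domi R a b \<or> domi R b a"
proof -
  obtain w where w: "w \<in> carrier R" "a \<otimes> b = w \<otimes> (a \<otimes> a)" using pidl_E[OF abI] by blast
  let ?b' = "b \<ominus> w \<otimes> a"
  have b'c: "?b' \<in> carrier R" using a b w by simp
  have ab': "a \<otimes> ?b' = \<zero>"
  proof -
    have "a \<otimes> ?b' = a \<otimes> b \<ominus> w \<otimes> (a \<otimes> a)" using a b w(1) by algebra
    thus ?thesis using w a by (simp add: r_neg minus_eq)
  qed
  from ab0[OF a b'c ab'] show ?thesis
  proof
    assume "?b' \<otimes> ?b' \<in> PIdl (a \<otimes> a)"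
    thus ?thesis using dom_from_sq[OF a b w(1) w(2)] by simp
  next
    assume "a \<otimes> a \<in> PIdl (?b' \<otimes> ?b')"
    then obtain z where z: "z \<in> carrier R" "a \<otimes> a = z \<otimes> (?b' \<otimes> ?b')" using pidl_E by blast
    show ?thesis
    proof (cases "z \<in> Units R")
      case True
      have "?b' \<otimes> ?b' = inv z \<otimes> (a \<otimes> a)" by (rule unit_solve[OF True _ _ z(2)]) (use a b'c in simp_all)
      hence "?b' \<otimes> ?b' \<in> PIdl (a \<otimes> a)" using True by (intro pidl_I[of "inv z"]) auto
      thus ?thesis using dom_from_sq[OF a b w(1) w(2)] by simp
    next
      case zn: False
      let ?t = "\<one> \<oplus> (w \<otimes> w) \<otimes> z"
      have "\<ominus> ((w \<otimes> w) \<otimes> z) \<notin> Units R"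
      proof
        assume "\<ominus> ((w \<otimes> w) \<otimes> z) \<in> Units R"
        moreover have "\<ominus> ((w \<otimes> w) \<otimes> z) = (\<ominus> (w \<otimes> w)) \<otimes> z" using w(1) z(1) by algebra
        ultimately have "z \<in> Units R" using unit_factor[of "\<ominus> (w \<otimes> w)" z] w z by simp
        thus False using zn by simp
      qed
      moreover have "\<ominus> ((w \<otimes> w) \<otimes> z) \<in> carrier R" using w z by simp
      ultimately have "\<one> \<ominus> \<ominus> ((w \<otimes> w) \<otimes> z) \<in> Units R" using local_units[OF L] by blast
      moreover have "\<one> \<ominus> \<ominus> ((w \<otimes> w) \<otimes> z) = ?t" using w(1) z(1) by algebra
      ultimately have t: "?t \<in> Units R" by simp
      have "b \<otimes> b = ?b' \<otimes> ?b' \<oplus> (w \<otimes> w) \<otimes> (a \<otimes> a) \<oplus> ((\<one> \<oplus> \<one>) \<otimes> w) \<otimes> (a \<otimes> ?b')"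
        using a b w(1) by algebra
      also have "\<dots> = ?b' \<otimes> ?b' \<oplus> (w \<otimes> w) \<otimes> (z \<otimes> (?b' \<otimes> ?b'))" using ab' z w b'c by simp
      also have "\<dots> = ?t \<otimes> (?b' \<otimes> ?b')" using w(1) z(1) b'c by algebra
      finally have bb: "b \<otimes> b = ?t \<otimes> (?b' \<otimes> ?b')" .
      have bb': "?b' \<otimes> ?b' = inv ?t \<otimes> (b \<otimes> b)" by (rule unit_solve[OF t _ _ bb]) (use b b'c in simp_all)
      have aa: "a \<otimes> a = (z \<otimes> inv ?t) \<otimes> (b \<otimes> b)" using z bb' t b by (simp add: m_assoc)
      have ba: "b \<otimes> a = (w \<otimes> (z \<otimes> inv ?t)) \<otimes> (b \<otimes> b)"
        using w(2) aa m_comm[OF a b] w z t b by (simp add: m_assoc)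
      have d1: "a \<otimes> a \<in> PIdl (b \<otimes> b)" by (rule pidl_I[OF _ aa]) (use z(1) t in simp)
      have d2: "b \<otimes> a \<in> PIdl (b \<otimes> b)" by (rule pidl_I[OF _ ba]) (use w(1) z(1) t in simp)
      have "domi R b a" unfolding domi_def using d1 d2 by simp
      thus ?thesis by simp
    qed
  qed
qed

lemma T1:
  assumes a: "a \<in> carrier R" and b: "b \<in> carrier R"
  shows "domi R a b \<or> domi R b a"
proof -
  have negb: "\<ominus> b \<in> carrier R" using b by simp
  have J: "ideal (pid2 (a \<otimes> a) (b \<otimes> b)) R" by (rule pid2_ideal) (use a b in simp_all)
  have j1: "a \<otimes> a \<in> pid2 (a \<otimes> a) (b \<otimes> b)"
  proof -
    have "a \<otimes> a = \<one> \<otimes> (a \<otimes> a) \<oplus> \<zero> \<otimes> (b \<otimes> b)" using a b by simp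
    thus ?thesis unfolding pid2_def by blast
  qed
  have j2: "a \<otimes> \<ominus> b \<oplus> b \<otimes> a \<in> pid2 (a \<otimes> a) (b \<otimes> b)"
  proof -
    have "a \<otimes> \<ominus> b \<oplus> b \<otimes> a = \<zero> \<otimes> (a \<otimes> a) \<oplus> \<zero> \<otimes> (b \<otimes> b)" using a b by algebra
    thus ?thesis unfolding pid2_def by blast
  qed
  have j3: "b \<otimes> \<ominus> b \<in> pid2 (a \<otimes> a) (b \<otimes> b)"
  proof -
    have "b \<otimes> \<ominus> b = \<zero> \<otimes> (a \<otimes> a) \<oplus> (\<ominus> \<one>) \<otimes> (b \<otimes> b)" using a b by algebra
    thus ?thesis unfolding pid2_def by blast
  qed
  have "b \<otimes> a \<in> pid2 (a \<otimes> a) (b \<otimes> b)" by (rule lin_gauss[OF a b a negb J j1 j2 j3]) auto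
  then obtain r s where rs: "r \<in> carrier R" "s \<in> carrier R" "b \<otimes> a = r \<otimes> (a \<otimes> a) \<oplus> s \<otimes> (b \<otimes> b)"
    unfolding pid2_def by auto
  have abc: "a \<otimes> b \<in> carrier R" using a b by simp
  have J2: "ideal (PIdl (a \<otimes> b)) R" by (rule cgenideal_ideal[OF abc])
  have sb: "s \<otimes> b \<in> carrier R" and ra: "r \<otimes> a \<in> carrier R" using rs a b by auto
  have k1: "a \<otimes> (s \<otimes> b) \<in> PIdl (a \<otimes> b)"
    by (rule pidl_I[of s]) (use rs(1,2) a b in \<open>simp_all add: m_lcomm\<close>)
  have k2: "a \<otimes> (r \<otimes> a) \<oplus> b \<otimes> (s \<otimes> b) \<in> PIdl (a \<otimes> b)"
  proof -
    have "a \<otimes> (r \<otimes> a) \<oplus> b \<otimes> (s \<otimes> b) = r \<otimes> (a \<otimes> a) \<oplus> s \<otimes> (b \<otimes> b)" using rs(1,2) a b by algebra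
    also have "\<dots> = a \<otimes> b" using rs(3) m_comm[OF a b] by simp
    finally show ?thesis using cgenideal_self[OF abc] by simp
  qed
  have k3: "b \<otimes> (r \<otimes> a) \<in> PIdl (a \<otimes> b)"
    by (rule pidl_I[of r]) (use rs(1,2) a b in \<open>simp_all add: m_lcomm m_comm\<close>)
  have "a \<otimes> (r \<otimes> a) \<in> PIdl (a \<otimes> b)" by (rule lin_gauss[OF a b sb ra J2 k1 k2 k3]) auto
  then obtain U where U: "U \<in> carrier R" "a \<otimes> (r \<otimes> a) = U \<otimes> (a \<otimes> b)" using pidl_E by blast
  have "b \<otimes> (s \<otimes> b) \<in> PIdl (a \<otimes> b)" by (rule lin_gauss[OF a b sb ra J2 k1 k2 k3]) auto
  then obtain V where V: "V \<in> carrier R" "b \<otimes> (s \<otimes> b) = V \<otimes> (a \<otimes> b)" using pidl_E by blast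
  have abUV: "a \<otimes> b = (U \<oplus> V) \<otimes> (a \<otimes> b)"
  proof -
    have "a \<otimes> b = a \<otimes> (r \<otimes> a) \<oplus> b \<otimes> (s \<otimes> b)"
    proof -
      have "a \<otimes> (r \<otimes> a) \<oplus> b \<otimes> (s \<otimes> b) = r \<otimes> (a \<otimes> a) \<oplus> s \<otimes> (b \<otimes> b)" using rs(1,2) a b by algebra
      thus ?thesis using rs(3) m_comm[OF a b] by simp
    qed
    also have "\<dots> = (U \<oplus> V) \<otimes> (a \<otimes> b)" using U V abc by (simp add: l_distr)
    finally show ?thesis .
  qed
  have UVc: "U \<oplus> V \<in> carrier R" using U V by simp
  from local_units[OF L UVc] show ?thesis
  proof
    assume uv: "U \<oplus> V \<in> Units R"
    from local_sum_unit[OF L U(1) V(1) uv] show ?thesis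
    proof
      assume Uu: "U \<in> Units R"
      have "a \<otimes> b = inv U \<otimes> (a \<otimes> (r \<otimes> a))" by (rule unit_solve[OF Uu abc _ U(2)]) (use a rs in simp)
      also have "\<dots> = (inv U \<otimes> r) \<otimes> (a \<otimes> a)" using Units_inv_closed[OF Uu] a rs(1,2) by algebra
      finally have "a \<otimes> b \<in> PIdl (a \<otimes> a)" using Uu rs by (intro pidl_I[of "inv U \<otimes> r"]) auto
      thus ?thesis by (rule T1_half[OF a b])
    next
      assume Vu: "V \<in> Units R"
      have "a \<otimes> b = inv V \<otimes> (b \<otimes> (s \<otimes> b))" by (rule unit_solve[OF Vu abc _ V(2)]) (use b rs in simp)
      also have "\<dots> = (inv V \<otimes> s) \<otimes> (b \<otimes> b)" using Units_inv_closed[OF Vu] b rs(1,2) by algebra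
      finally have "b \<otimes> a \<in> PIdl (b \<otimes> b)" using Vu rs m_comm[OF a b] by (intro pidl_I[of "inv V \<otimes> s"]) auto
      thus ?thesis using T1_half[OF b a] by blast
    qed
  next
    assume t: "\<one> \<ominus> (U \<oplus> V) \<in> Units R"
    have "(\<one> \<ominus> (U \<oplus> V)) \<otimes> (a \<otimes> b) = a \<otimes> b \<ominus> (U \<oplus> V) \<otimes> (a \<otimes> b)" using UVc abc by algebra
    also have "\<dots> = \<zero>" using abUV[symmetric] abc by (simp add: r_neg minus_eq)
    finally have ab: "a \<otimes> b = \<zero>" using unit_cancel[OF t abc] by simp
    have z1: "a \<otimes> b \<in> PIdl (a \<otimes> a)" using ab a by (intro pidl_I[of \<zero>]) auto
    have z2: "b \<otimes> a \<in> PIdl (b \<otimes> b)" using ab m_comm[OF a b] b by (intro pidl_I[of \<zero>]) auto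
    from ab0[OF a b ab] show ?thesis unfolding domi_def using z1 z2 by auto
  qed
qed

end


context gloc begin

lemma domi_refl: "a \<in> carrier R \<Longrightarrow> domi R a a"
  unfolding domi_def by (auto intro!: pidl_I[of \<one>])

lemma domi_zero: "a \<in> carrier R \<Longrightarrow> domi R a \<zero>"
  unfolding domi_def by (auto intro!: pidl_I[of \<zero>])

lemma domi_trans:
  assumes a: "a \<in> carrier R" and x: "x \<in> carrier R" and y: "y \<in> carrier R"
    and ax: "domi R a x" and xy: "domi R x y"
  shows "domi R a y"
proof -
  obtain \<alpha> where al: "\<alpha> \<in> carrier R" "x \<otimes> x = \<alpha> \<otimes> (a \<otimes> a)" using ax pidl_E unfolding domi_def by blast
  obtain \<gamma> where ga: "\<gamma> \<in> carrier R" "y \<otimes> y = \<gamma> \<otimes> (x \<otimes> x)" using xy pidl_E unfolding domi_def by blast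
  have yy: "y \<otimes> y = (\<gamma> \<otimes> \<alpha>) \<otimes> (a \<otimes> a)" using ga al a by (simp add: m_assoc)
  have yyI: "y \<otimes> y \<in> PIdl (a \<otimes> a)" by (rule pidl_I[OF _ yy]) (use al ga in simp)
  from T1[OF a y] show ?thesis
  proof
    assume "domi R a y" thus ?thesis .
  next
    assume "domi R y a"
    then obtain \<epsilon> \<eta> where ep: "\<epsilon> \<in> carrier R" "a \<otimes> a = \<epsilon> \<otimes> (y \<otimes> y)"
      and et: "\<eta> \<in> carrier R" "y \<otimes> a = \<eta> \<otimes> (y \<otimes> y)" using pidl_E unfolding domi_def by metis
    let ?k = "\<epsilon> \<otimes> (\<gamma> \<otimes> \<alpha>)"
    have kc: "?k \<in> carrier R" using ep al ga by simp
    have aak: "a \<otimes> a = ?k \<otimes> (a \<otimes> a)" using ep(2) yy ep(1) al(1) ga(1) a by (simp add: m_assoc)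
    from local_units[OF L kc] show ?thesis
    proof
      assume ku: "?k \<in> Units R"
      have eu: "\<epsilon> \<in> Units R"
      proof (rule unit_factor[of "\<gamma> \<otimes> \<alpha>"])
        show "(\<gamma> \<otimes> \<alpha>) \<otimes> \<epsilon> \<in> Units R" using ku m_comm[of \<epsilon> "\<gamma> \<otimes> \<alpha>"] ep al ga by simp
      qed (use ep al ga in simp_all)
      have "y \<otimes> y = inv \<epsilon> \<otimes> (a \<otimes> a)" by (rule unit_solve[OF eu _ _ ep(2)]) (use a y in simp_all)
      hence "a \<otimes> y = (\<eta> \<otimes> inv \<epsilon>) \<otimes> (a \<otimes> a)" using et m_comm[OF a y] eu a by (simp add: m_assoc)
      hence "a \<otimes> y \<in> PIdl (a \<otimes> a)" by (rule pidl_I[rotated]) (use et eu in simp)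
      thus ?thesis unfolding domi_def using yyI by simp
    next
      assume t: "\<one> \<ominus> ?k \<in> Units R"
      have "(\<one> \<ominus> ?k) \<otimes> (a \<otimes> a) = a \<otimes> a \<ominus> ?k \<otimes> (a \<otimes> a)" using kc a by algebra
      also have "\<dots> = \<zero>" using aak[symmetric] a by (simp add: r_neg minus_eq)
      finally have "a \<otimes> a = \<zero>" using unit_cancel[OF t] a by simp
      hence "y \<otimes> y = \<zero>" using yy al ga by simp
      hence "a \<otimes> y = \<zero>" using et m_comm[OF a y] by simp
      hence "a \<otimes> y \<in> PIdl (a \<otimes> a)" using a by (intro pidl_I[of \<zero>]) auto
      thus ?thesis unfolding domi_def using yyI by simp
    qed
  qed
qed

lemma dominant:
  fixes f :: "nat \<Rightarrow> 'a"
  assumes f: "\<And>i. f i \<in> carrier R"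
  shows "\<exists>p\<le>n. \<forall>i\<le>n. domi R (f p) (f i)"
proof (induct n)
  case 0 thus ?case using domi_refl f by auto
next
  case (Suc n)
  then obtain p where p: "p \<le> n" "\<forall>i\<le>n. domi R (f p) (f i)" by blast
  from T1[OF f f] show ?case
  proof
    assume d: "domi R (f p) (f (Suc n))"
    show ?thesis
    proof (intro exI[of _ p] conjI allI impI)
      show "p \<le> Suc n" using p by simp
      fix i assume "i \<le> Suc n"
      thus "domi R (f p) (f i)" using p d by (cases "i = Suc n") auto
    qed
  next
    assume d: "domi R (f (Suc n)) (f p)"
    show ?thesis
    proof (intro exI[of _ "Suc n"] conjI allI impI)
      fix i assume "i \<le> Suc n"
      thus "domi R (f (Suc n)) (f i)"
        using p d domi_trans[OF f f f] domi_refl[OF f] by (cases "i = Suc n") auto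
    qed simp
  qed
qed

lemma sqzero_prod:
  assumes n: "n \<in> carrier R" and m: "m \<in> carrier R" and nn: "n \<otimes> n = \<zero>" and mm: "m \<otimes> m = \<zero>"
  shows "n \<otimes> m = \<zero>"
proof -
  from T1[OF n m] show ?thesis
  proof
    assume "domi R n m"
    then obtain r where "r \<in> carrier R" "n \<otimes> m = r \<otimes> (n \<otimes> n)" using pidl_E unfolding domi_def by blast
    thus ?thesis using nn by simp
  next
    assume "domi R m n"
    then obtain r where "r \<in> carrier R" "m \<otimes> n = r \<otimes> (m \<otimes> m)" using pidl_E unfolding domi_def by blast
    thus ?thesis using mm m_comm[OF n m] by simp
  qed
qed

lemma decomp:
  assumes a: "a \<in> carrier R" and x: "x \<in> carrier R" and d: "domi R a x"
  shows "\<exists>s\<in>carrier R. a \<otimes> (x \<ominus> s \<otimes> a) = \<zero> \<and> (x \<ominus> s \<otimes> a) \<otimes> (x \<ominus> s \<otimes> a) = \<zero>"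
proof -
  obtain s where s: "s \<in> carrier R" "a \<otimes> x = s \<otimes> (a \<otimes> a)" using d pidl_E unfolding domi_def by blast
  obtain t where t: "t \<in> carrier R" "x \<otimes> x = t \<otimes> (a \<otimes> a)" using d pidl_E unfolding domi_def by blast
  let ?n = "x \<ominus> s \<otimes> a"
  have nc: "?n \<in> carrier R" using x s a by simp
  have an: "a \<otimes> ?n = \<zero>"
  proof -
    have "a \<otimes> ?n = a \<otimes> x \<ominus> s \<otimes> (a \<otimes> a)" using a x s(1) by algebra
    thus ?thesis using s a by (simp add: r_neg minus_eq)
  qed
  have "?n \<otimes> ?n = x \<otimes> x \<ominus> (s \<otimes> (a \<otimes> x)) \<ominus> s \<otimes> (a \<otimes> ?n)"
    using a x s(1) by algebra
  also have "\<dots> = (t \<ominus> s \<otimes> s) \<otimes> (a \<otimes> a)" using an s t a by (simp only:) (use a s(1) t(1) in algebra)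
  finally have "?n \<otimes> ?n \<in> PIdl (a \<otimes> a)" by (rule pidl_I[rotated]) (use s t in simp)
  hence "?n \<otimes> ?n = \<zero>" by (rule T2[OF a nc an])
  thus ?thesis using an s by blast
qed

end


locale temod = module R M for R :: "('a, 'c) ring_scheme" (structure) and M :: "('a, 'b) module"
begin

abbreviation "T \<equiv> triv_ext R M"

lemma te_carrier: "carrier T = carrier R \<times> carrier M" by (simp add: triv_ext_def)
lemma te_mult: "(a, e) \<otimes>\<^bsub>T\<^esub> (b, d) = (a \<otimes> b, a \<odot>\<^bsub>M\<^esub> d \<oplus>\<^bsub>M\<^esub> b \<odot>\<^bsub>M\<^esub> e)" by (simp add: triv_ext_def)
lemma te_add: "(a, e) \<oplus>\<^bsub>T\<^esub> (b, d) = (a \<oplus> b, e \<oplus>\<^bsub>M\<^esub> d)" by (simp add: triv_ext_def)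
lemma te_one: "\<one>\<^bsub>T\<^esub> = (\<one>, \<zero>\<^bsub>M\<^esub>)" by (simp add: triv_ext_def)
lemma te_zero: "\<zero>\<^bsub>T\<^esub> = (\<zero>, \<zero>\<^bsub>M\<^esub>)" by (simp add: triv_ext_def)

lemmas te_simps = te_carrier te_mult te_add te_one te_zero

lemma te_cring: "cring T"
proof (rule cringI)
  show "abelian_group T"
  proof (rule abelian_groupI)
    fix x y z assume x: "x \<in> carrier T" and y: "y \<in> carrier T" and z: "z \<in> carrier T"
    obtain a e where [simp]: "x = (a, e)" by fastforce
    obtain b d where [simp]: "y = (b, d)" by fastforce
    obtain c f where [simp]: "z = (c, f)" by fastforce
    have c: "a \<in> carrier R" "e \<in> carrier M" "b \<in> carrier R" "d \<in> carrier M" "c \<in> carrier R" "f \<in> carrier M"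
      using x y z by (auto simp: te_carrier)
    show "x \<oplus>\<^bsub>T\<^esub> y \<in> carrier T" using c by (simp add: te_simps)
    show "(x \<oplus>\<^bsub>T\<^esub> y) \<oplus>\<^bsub>T\<^esub> z = x \<oplus>\<^bsub>T\<^esub> (y \<oplus>\<^bsub>T\<^esub> z)" using c by (simp add: te_simps R.a_assoc M.a_assoc)
    show "x \<oplus>\<^bsub>T\<^esub> y = y \<oplus>\<^bsub>T\<^esub> x" using c by (simp add: te_simps R.a_comm M.a_comm)
  next
    show "\<zero>\<^bsub>T\<^esub> \<in> carrier T" by (simp add: te_simps)
  next
    fix x assume x: "x \<in> carrier T"
    obtain a e where [simp]: "x = (a, e)" by fastforce
    have c: "a \<in> carrier R" "e \<in> carrier M" using x by (auto simp: te_carrier)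
    show "\<zero>\<^bsub>T\<^esub> \<oplus>\<^bsub>T\<^esub> x = x" using c by (simp add: te_simps)
    show "\<exists>y\<in>carrier T. y \<oplus>\<^bsub>T\<^esub> x = \<zero>\<^bsub>T\<^esub>"
      by (rule bexI[of _ "(\<ominus> a, \<ominus>\<^bsub>M\<^esub> e)"]) (use c in \<open>simp_all add: te_simps R.l_neg M.l_neg\<close>)
  qed
next
  show "comm_monoid T"
  proof (rule comm_monoidI)
    fix x y z assume x: "x \<in> carrier T" and y: "y \<in> carrier T" and z: "z \<in> carrier T"
    obtain a e where [simp]: "x = (a, e)" by fastforce
    obtain b d where [simp]: "y = (b, d)" by fastforce
    obtain c f where [simp]: "z = (c, f)" by fastforce
    have c: "a \<in> carrier R" "e \<in> carrier M" "b \<in> carrier R" "d \<in> carrier M" "c \<in> carrier R" "f \<in> carrier M"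
      using x y z by (auto simp: te_carrier)
    show "x \<otimes>\<^bsub>T\<^esub> y \<in> carrier T" using c by (simp add: te_simps)
    show "x \<otimes>\<^bsub>T\<^esub> y \<otimes>\<^bsub>T\<^esub> z = x \<otimes>\<^bsub>T\<^esub> (y \<otimes>\<^bsub>T\<^esub> z)"
      using c by (simp add: te_simps R.m_assoc smult_r_distr smult_assoc1[symmetric] M.a_ac R.m_comm[of a b] R.m_comm[of c a] R.m_comm[of c b] R.m_lcomm)
    show "x \<otimes>\<^bsub>T\<^esub> y = y \<otimes>\<^bsub>T\<^esub> x" using c by (simp add: te_simps R.m_comm M.a_comm)
  next
    show "\<one>\<^bsub>T\<^esub> \<in> carrier T" by (simp add: te_simps)
  next
    fix x assume x: "x \<in> carrier T"
    obtain a e where [simp]: "x = (a, e)" by fastforce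
    have c: "a \<in> carrier R" "e \<in> carrier M" using x by (auto simp: te_carrier)
    show "\<one>\<^bsub>T\<^esub> \<otimes>\<^bsub>T\<^esub> x = x" using c by (simp add: te_simps)
  qed
next
  fix x y z assume x: "x \<in> carrier T" and y: "y \<in> carrier T" and z: "z \<in> carrier T"
  obtain a e where [simp]: "x = (a, e)" by fastforce
  obtain b d where [simp]: "y = (b, d)" by fastforce
  obtain c f where [simp]: "z = (c, f)" by fastforce
  have c: "a \<in> carrier R" "e \<in> carrier M" "b \<in> carrier R" "d \<in> carrier M" "c \<in> carrier R" "f \<in> carrier M"
    using x y z by (auto simp: te_carrier)
  show "(x \<oplus>\<^bsub>T\<^esub> y) \<otimes>\<^bsub>T\<^esub> z = x \<otimes>\<^bsub>T\<^esub> z \<oplus>\<^bsub>T\<^esub> y \<otimes>\<^bsub>T\<^esub> z"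
    using c by (simp add: te_simps R.l_distr smult_l_distr smult_r_distr M.a_ac)
qed

end


sublocale temod \<subseteq> T: cring "triv_ext R M" by (rule te_cring)

context temod begin

lemma te_finsum:
  assumes A: "finite A" and h: "\<And>i. i \<in> A \<Longrightarrow> h i \<in> carrier R" and k: "\<And>i. i \<in> A \<Longrightarrow> k i \<in> carrier M"
  shows "finsum T (\<lambda>i. (h i, k i)) A = (finsum R h A, finsum M k A)"
  using A h k
proof (induct A rule: finite_induct)
  case empty thus ?case by (simp add: te_zero)
next
  case (insert x F)
  have "finsum T (\<lambda>i. (h i, k i)) (insert x F) = (h x, k x) \<oplus>\<^bsub>T\<^esub> finsum T (\<lambda>i. (h i, k i)) F"
    by (rule T.finsum_insert) (use insert in \<open>auto simp: te_carrier\<close>)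
  also have "\<dots> = (h x \<oplus> finsum R h F, k x \<oplus>\<^bsub>M\<^esub> finsum M k F)" using insert by (simp add: te_add)
  also have "\<dots> = (finsum R h (insert x F), finsum M k (insert x F))"
    using insert by (simp add: R.finsum_insert M.finsum_insert Pi_def)
  finally show ?case .
qed

lemma te_neg: "a \<in> carrier R \<Longrightarrow> e \<in> carrier M \<Longrightarrow> \<ominus>\<^bsub>T\<^esub> (a, e) = (\<ominus> a, \<ominus>\<^bsub>M\<^esub> e)"
  by (rule T.minus_equality) (simp_all add: te_simps R.l_neg M.l_neg)

lemma te_fst_ideal:
  assumes J: "ideal J R"
  shows "ideal {x \<in> carrier T. fst x \<in> J} T"
proof (rule T.idealI_simple)
  interpret J: ideal J R by fact
  show "{x \<in> carrier T. fst x \<in> J} \<subseteq> carrier T" by auto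
  show "\<zero>\<^bsub>T\<^esub> \<in> {x \<in> carrier T. fst x \<in> J}" by (simp add: te_zero te_carrier)
  fix x y assume x: "x \<in> {x \<in> carrier T. fst x \<in> J}"
  obtain a e where xe[simp]: "x = (a, e)" by fastforce
  have xc: "a \<in> carrier R" "e \<in> carrier M" "a \<in> J" using x by (auto simp: te_carrier)
  {
    assume y: "y \<in> {x \<in> carrier T. fst x \<in> J}"
    obtain b d where [simp]: "y = (b, d)" by fastforce
    have yc: "b \<in> carrier R" "d \<in> carrier M" "b \<in> J" using y by (auto simp: te_carrier)
    show "x \<oplus>\<^bsub>T\<^esub> y \<in> {x \<in> carrier T. fst x \<in> J}" using xc yc by (simp add: te_simps J.a_closed)
  }
  show "\<ominus>\<^bsub>T\<^esub> x \<in> {x \<in> carrier T. fst x \<in> J}" using xc by (simp add: te_neg te_carrier J.a_inv_closed)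
  assume y: "y \<in> carrier T"
  obtain b d where [simp]: "y = (b, d)" by fastforce
  have yc: "b \<in> carrier R" "d \<in> carrier M" using y by (auto simp: te_carrier)
  show "y \<otimes>\<^bsub>T\<^esub> x \<in> {x \<in> carrier T. fst x \<in> J}" using xc yc by (simp add: te_simps J.I_l_closed)
qed

lemma te_conv_fst:
  assumes "\<And>i. f i \<in> carrier R" "\<And>i. g i \<in> carrier R"
  shows "conv T (\<lambda>i. (f i, \<zero>\<^bsub>M\<^esub>)) (\<lambda>i. (g i, \<zero>\<^bsub>M\<^esub>)) k = (conv R f g k, \<zero>\<^bsub>M\<^esub>)"
proof -
  have "conv T (\<lambda>i. (f i, \<zero>\<^bsub>M\<^esub>)) (\<lambda>i. (g i, \<zero>\<^bsub>M\<^esub>)) k = finsum T (\<lambda>i. (f i \<otimes> g (k - i), \<zero>\<^bsub>M\<^esub>)) {..k}"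
    unfolding conv_def using assms by (simp add: te_mult)
  also have "\<dots> = (conv R f g k, finsum M (\<lambda>i. \<zero>\<^bsub>M\<^esub>) {..k})"
    unfolding conv_def by (rule te_finsum) (use assms in auto)
  finally show ?thesis by simp
qed

lemma gauss_T_imp_R:
  assumes GT: "gauss_coeff T"
  shows "gauss_coeff R"
  unfolding gauss_coeff_def
proof (intro allI impI)
  fix f g n m assume f: "fsupp R f n" and g: "fsupp R g m"
  have fc: "\<And>i. f i \<in> carrier R" and gc: "\<And>i. g i \<in> carrier R" using f g by (auto simp: fsupp_def)
  let ?F = "\<lambda>i. (f i, \<zero>\<^bsub>M\<^esub>)" and ?G = "\<lambda>i. (g i, \<zero>\<^bsub>M\<^esub>)"
  have Fc: "\<And>i. ?F i \<in> carrier T" and Gc: "\<And>i. ?G i \<in> carrier T" using fc gc by (auto simp: te_carrier)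
  have fF: "fsupp T ?F n" "fsupp T ?G m" using f g Fc Gc by (auto simp: fsupp_def te_zero)
  have eqT: "cont T (conv T ?F ?G) = cont T ?F \<cdot>\<^bsub>T\<^esub> cont T ?G" using GT fF unfolding gauss_coeff_def by blast
  have I: "ideal (cont R (conv R f g)) R" by (rule cont_ideal) (rule conv_closed[OF fc gc])
  have IT: "ideal {x \<in> carrier T. fst x \<in> cont R (conv R f g)} T" by (rule te_fst_ideal[OF I])
  have "range (conv T ?F ?G) \<subseteq> {x \<in> carrier T. fst x \<in> cont R (conv R f g)}"
    using te_conv_fst[OF fc gc] cont_mem[OF conv_closed[OF fc gc]] conv_closed[OF fc gc] by (auto simp: te_carrier)
  hence sub: "cont T (conv T ?F ?G) \<subseteq> {x \<in> carrier T. fst x \<in> cont R (conv R f g)}"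
    unfolding cont_def[of T] by (rule T.genideal_minimal[OF IT])
  have prods: "f i \<otimes> g j \<in> cont R (conv R f g)" for i j
  proof -
    have "?F i \<otimes>\<^bsub>T\<^esub> ?G j \<in> cont T ?F \<cdot>\<^bsub>T\<^esub> cont T ?G"
      by (rule ideal_prod.prod) (rule T.cont_mem[OF Fc], rule T.cont_mem[OF Gc])
    hence "?F i \<otimes>\<^bsub>T\<^esub> ?G j \<in> {x \<in> carrier T. fst x \<in> cont R (conv R f g)}" using eqT sub by auto
    thus ?thesis by (simp add: te_mult)
  qed
  have "cont R f \<cdot> cont R g \<subseteq> cont R (conv R f g)"
    unfolding cont_def[of R f] cont_def[of R g]
    by (rule ideal_prod_genideal_subset[OF _ _ I]) (use fc gc prods in auto)
  moreover have "cont R (conv R f g) \<subseteq> cont R f \<cdot> cont R g" by (rule cont_conv_subset) (use fc gc in auto)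
  ultimately show "cont R (conv R f g) = cont R f \<cdot> cont R g" by (rule subset_antisym[rotated])
qed

end


context temod begin

lemma gauss_T_imp_sq:
  assumes GT: "gauss_coeff T" and a: "a \<in> carrier R"
  shows "smult_module M a = smult_module M (a \<otimes> a)"
proof -
  interpret TG: gcr T by (rule gcr.intro[OF te_cring]) (rule gcr_axioms.intro[OF GT])
  have aac: "a \<otimes> a \<in> carrier R" using a by simp
  have sub1: "a \<odot>\<^bsub>M\<^esub> e \<in> smult_module M (a \<otimes> a)" if e: "e \<in> carrier M" for e
  proof -
    let ?J = "PIdl\<^bsub>T\<^esub> (a \<otimes> a, \<zero>\<^bsub>M\<^esub>)"
    have c1: "(a, \<zero>\<^bsub>M\<^esub>) \<in> carrier T" "(\<zero>, e) \<in> carrier T" "(\<zero>, \<ominus>\<^bsub>M\<^esub> e) \<in> carrier T"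
      using a e by (auto simp: te_carrier)
    have gc: "(a \<otimes> a, \<zero>\<^bsub>M\<^esub>) \<in> carrier T" using aac by (simp add: te_carrier)
    have J: "ideal ?J T" by (rule T.cgenideal_ideal[OF gc])
    have j1: "(a, \<zero>\<^bsub>M\<^esub>) \<otimes>\<^bsub>T\<^esub> (a, \<zero>\<^bsub>M\<^esub>) \<in> ?J"
      using T.cgenideal_self[OF gc] a by (simp add: te_mult)
    have z: "\<zero>\<^bsub>T\<^esub> \<in> ?J" by (rule T.ideal_mem_zero[OF J])
    have j2: "(a, \<zero>\<^bsub>M\<^esub>) \<otimes>\<^bsub>T\<^esub> (\<zero>, \<ominus>\<^bsub>M\<^esub> e) \<oplus>\<^bsub>T\<^esub> (\<zero>, e) \<otimes>\<^bsub>T\<^esub> (a, \<zero>\<^bsub>M\<^esub>) \<in> ?J"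
    proof -
      have "(a, \<zero>\<^bsub>M\<^esub>) \<otimes>\<^bsub>T\<^esub> (\<zero>, \<ominus>\<^bsub>M\<^esub> e) \<oplus>\<^bsub>T\<^esub> (\<zero>, e) \<otimes>\<^bsub>T\<^esub> (a, \<zero>\<^bsub>M\<^esub>) = \<zero>\<^bsub>T\<^esub>"
        using a e by (simp add: te_simps smult_r_minus M.l_neg)
      thus ?thesis using z by simp
    qed
    have j3: "(\<zero>, e) \<otimes>\<^bsub>T\<^esub> (\<zero>, \<ominus>\<^bsub>M\<^esub> e) \<in> ?J"
    proof -
      have "(\<zero>, e) \<otimes>\<^bsub>T\<^esub> (\<zero>, \<ominus>\<^bsub>M\<^esub> e) = \<zero>\<^bsub>T\<^esub>" using e by (simp add: te_simps)
      thus ?thesis using z by simp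
    qed
    have "(\<zero>, e) \<otimes>\<^bsub>T\<^esub> (a, \<zero>\<^bsub>M\<^esub>) \<in> ?J"
      by (rule TG.lin_gauss[OF c1(1) c1(2) c1(1) c1(3) J j1 j2 j3]) auto
    moreover have "(\<zero>, e) \<otimes>\<^bsub>T\<^esub> (a, \<zero>\<^bsub>M\<^esub>) = (\<zero>, a \<odot>\<^bsub>M\<^esub> e)" using a e by (simp add: te_mult)
    ultimately have "(\<zero>, a \<odot>\<^bsub>M\<^esub> e) \<in> ?J" by simp
    then obtain r z where rz: "(r, z) \<in> carrier T" "(\<zero>, a \<odot>\<^bsub>M\<^esub> e) = (r, z) \<otimes>\<^bsub>T\<^esub> (a \<otimes> a, \<zero>\<^bsub>M\<^esub>)"
      unfolding cgenideal_def by auto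
    have rzc: "r \<in> carrier R" "z \<in> carrier M" using rz(1) by (auto simp: te_carrier)
    have "a \<odot>\<^bsub>M\<^esub> e = (a \<otimes> a) \<odot>\<^bsub>M\<^esub> z" using rz(2) rzc aac by (simp add: te_mult)
    thus ?thesis unfolding smult_module_def using rzc by auto
  qed
  show ?thesis
  proof
    show "smult_module M a \<subseteq> smult_module M (a \<otimes> a)" using sub1 unfolding smult_module_def by auto
    show "smult_module M (a \<otimes> a) \<subseteq> smult_module M a"
    proof
      fix x assume "x \<in> smult_module M (a \<otimes> a)"
      then obtain e where e: "e \<in> carrier M" "x = (a \<otimes> a) \<odot>\<^bsub>M\<^esub> e" unfolding smult_module_def by auto
      hence "x = a \<odot>\<^bsub>M\<^esub> (a \<odot>\<^bsub>M\<^esub> e)" using a by (simp add: smult_assoc1)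
      thus "x \<in> smult_module M a" unfolding smult_module_def using e a by auto
    qed
  qed
qed

end


context cring begin

lemma conv_comm:
  assumes f: "\<And>i. f i \<in> carrier R" and g: "\<And>i. g i \<in> carrier R"
  shows "conv R f g k = conv R g f k"
proof -
  let ?h = "\<lambda>i::nat. k - i"
  have inj: "inj_on ?h {..k}" by (auto simp: inj_on_def)
  have img: "?h ` {..k} = {..k}"
  proof
    show "?h ` {..k} \<subseteq> {..k}" by auto
    show "{..k} \<subseteq> ?h ` {..k}"
    proof
      fix i assume "i \<in> {..k}"
      hence "i = ?h (k - i)" "k - i \<in> {..k}" by auto
      thus "i \<in> ?h ` {..k}" by blast
    qed
  qed
  have "conv R g f k = finsum R (\<lambda>i. g i \<otimes> f (k - i)) (?h ` {..k})"
    unfolding conv_def img ..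
  also have "\<dots> = finsum R (\<lambda>x. (\<lambda>i. g i \<otimes> f (k - i)) (?h x)) {..k}"
    by (rule finsum_reindex) (use f g inj in auto)
  also have "\<dots> = finsum R (\<lambda>i. f i \<otimes> g (k - i)) {..k}"
  proof (rule finsum_cong')
    fix i assume "i \<in> {..k}"
    hence "k - (k - i) = i" by auto
    thus "(\<lambda>x. (\<lambda>i. g i \<otimes> f (k - i)) (?h x)) i = f i \<otimes> g (k - i)" using f g m_comm by simp
  qed (use f g in auto)
  finally show ?thesis unfolding conv_def by simp
qed

end

locale tsetup = temod R M + gloc R for R :: "('a, 'c) ring_scheme" (structure) and M :: "('a, 'b) module" +
  assumes Esq: "\<And>a. a \<in> carrier R \<Longrightarrow> smult_module M a = smult_module M (a \<otimes> a)"
begin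

lemma sq_kill:
  assumes n: "n \<in> carrier R" and nn: "n \<otimes> n = \<zero>" and e: "e \<in> carrier M"
  shows "n \<odot>\<^bsub>M\<^esub> e = \<zero>\<^bsub>M\<^esub>"
proof -
  have "n \<odot>\<^bsub>M\<^esub> e \<in> smult_module M n" unfolding smult_module_def using e by auto
  hence "n \<odot>\<^bsub>M\<^esub> e \<in> smult_module M \<zero>" using Esq[OF n] nn by simp
  then obtain z where "z \<in> carrier M" "n \<odot>\<^bsub>M\<^esub> e = \<zero> \<odot>\<^bsub>M\<^esub> z" unfolding smult_module_def by auto
  thus ?thesis by simp
qed

lemma esq_ex:
  assumes a: "a \<in> carrier R" and e: "e \<in> carrier M"
  shows "\<exists>z\<in>carrier M. a \<odot>\<^bsub>M\<^esub> e = (a \<otimes> a) \<odot>\<^bsub>M\<^esub> z"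
proof -
  have "a \<odot>\<^bsub>M\<^esub> e \<in> smult_module M a" unfolding smult_module_def using e by auto
  hence "a \<odot>\<^bsub>M\<^esub> e \<in> smult_module M (a \<otimes> a)" using Esq[OF a] by simp
  thus ?thesis unfolding smult_module_def by auto
qed

end


context tsetup begin

lemma core:
  assumes f: "fsupp T f n" and g: "fsupp T g m"
    and a_def: "a = fst (f p)"
    and domf: "\<And>i. domi R a (fst (f i))"
    and b: "b \<in> carrier R" and domg: "\<And>j. domi R b (fst (g j))"
    and ab: "domi R a b"
  shows "f i \<otimes>\<^bsub>T\<^esub> g j \<in> cont T (conv T f g)"
proof -
  have fc: "\<And>i. f i \<in> carrier T" and fz: "\<And>i. i \<ge> n \<Longrightarrow> f i = \<zero>\<^bsub>T\<^esub>" using f by (auto simp: fsupp_def)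
  have gc: "\<And>i. g i \<in> carrier T" and gz: "\<And>i. i \<ge> m \<Longrightarrow> g i = \<zero>\<^bsub>T\<^esub>" using g by (auto simp: fsupp_def)
  define \<alpha> where "\<alpha> i = fst (f i)" for i
  define \<epsilon> where "\<epsilon> i = snd (f i)" for i
  define \<beta> where "\<beta> j = fst (g j)" for j
  define \<delta> where "\<delta> j = snd (g j)" for j
  have fe: "\<And>i. f i = (\<alpha> i, \<epsilon> i)" and ge: "\<And>j. g j = (\<beta> j, \<delta> j)" by (simp_all add: \<alpha>_def \<epsilon>_def \<beta>_def \<delta>_def)
  have \<alpha>c: "\<And>i. \<alpha> i \<in> carrier R" and \<epsilon>c: "\<And>i. \<epsilon> i \<in> carrier M"
    using fc unfolding \<alpha>_def \<epsilon>_def by (auto simp: te_carrier mem_Times_iff)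
  have \<beta>c: "\<And>j. \<beta> j \<in> carrier R" and \<delta>c: "\<And>j. \<delta> j \<in> carrier M"
    using gc unfolding \<beta>_def \<delta>_def by (auto simp: te_carrier mem_Times_iff)
  have ac: "a \<in> carrier R" using a_def \<alpha>c \<alpha>_def by simp
  have domf': "\<And>i. domi R a (\<alpha> i)" using domf \<alpha>_def by simp
  have domg': "\<And>j. domi R b (\<beta> j)" using domg \<beta>_def by simp
  let ?P = "\<lambda>i s eh. s \<in> carrier R \<and> eh \<in> carrier M \<and> a \<otimes> (\<alpha> i \<ominus> s \<otimes> a) = \<zero>
       \<and> (\<alpha> i \<ominus> s \<otimes> a) \<otimes> (\<alpha> i \<ominus> s \<otimes> a) = \<zero> \<and> a \<odot>\<^bsub>M\<^esub> \<epsilon> i = (a \<otimes> a) \<odot>\<^bsub>M\<^esub> eh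
       \<and> (i = p \<longrightarrow> s = \<one>) \<and> (n \<le> i \<and> i \<noteq> p \<longrightarrow> s = \<zero> \<and> eh = \<zero>\<^bsub>M\<^esub>)"
  have ex: "\<exists>x. ?P i (fst x) (snd x)" for i
  proof (cases "i = p")
    case True
    obtain eh where eh: "eh \<in> carrier M" "a \<odot>\<^bsub>M\<^esub> \<epsilon> i = (a \<otimes> a) \<odot>\<^bsub>M\<^esub> eh" using esq_ex[OF ac \<epsilon>c] by blast
    have "\<alpha> i \<ominus> \<one> \<otimes> a = \<zero>" using True a_def \<alpha>_def ac by (simp add: r_neg minus_eq)
    hence "?P i \<one> eh" using True eh ac by simp
    thus ?thesis by (intro exI[of _ "(\<one>, eh)"]) simp
  next
    case False
    show ?thesis
    proof (cases "n \<le> i")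
      case True
      have "f i = \<zero>\<^bsub>T\<^esub>" using fz True by simp
      hence z: "\<alpha> i = \<zero>" "\<epsilon> i = \<zero>\<^bsub>M\<^esub>" using fe[of i] by (auto simp: te_zero)
      have "?P i \<zero> \<zero>\<^bsub>M\<^esub>" using z ac False True by (simp add: R.minus_eq R.r_neg)
      thus ?thesis by (intro exI[of _ "(\<zero>, \<zero>\<^bsub>M\<^esub>)"]) simp
    next
      case nlt: False
      obtain s where s: "s \<in> carrier R" "a \<otimes> (\<alpha> i \<ominus> s \<otimes> a) = \<zero>" "(\<alpha> i \<ominus> s \<otimes> a) \<otimes> (\<alpha> i \<ominus> s \<otimes> a) = \<zero>"
        using decomp[OF ac \<alpha>c domf'] by blast
      obtain eh where eh: "eh \<in> carrier M" "a \<odot>\<^bsub>M\<^esub> \<epsilon> i = (a \<otimes> a) \<odot>\<^bsub>M\<^esub> eh" using esq_ex[OF ac \<epsilon>c] by blast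
      have "?P i s eh" using s eh False nlt by simp
      thus ?thesis by (intro exI[of _ "(s, eh)"]) simp
    qed
  qed
  obtain Ch where Ch0: "\<forall>i. ?P i (fst (Ch i)) (snd (Ch i))" using choice[OF allI[OF ex]] ..
  define S where "S i = fst (Ch i)" for i
  define Eh where "Eh i = snd (Ch i)" for i
  define nn where "nn i = \<alpha> i \<ominus> S i \<otimes> a" for i
  have Chi: "?P i (S i) (Eh i)" for i using spec[OF Ch0, of i] unfolding S_def Eh_def .
  have Sc: "\<And>i. S i \<in> carrier R" using Chi by blast
  have Ehc: "\<And>i. Eh i \<in> carrier M" using Chi by blast
  have an: "\<And>i. a \<otimes> nn i = \<zero>" unfolding nn_def using Chi by blast
  have nnsq: "\<And>i. nn i \<otimes> nn i = \<zero>" unfolding nn_def using Chi by blast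
  have aeps: "\<And>i. a \<odot>\<^bsub>M\<^esub> \<epsilon> i = (a \<otimes> a) \<odot>\<^bsub>M\<^esub> Eh i" using Chi by blast
  have Sp: "S p = \<one>" using Chi[of p] by blast
  have Sz: "\<And>i. n \<le> i \<Longrightarrow> i \<noteq> p \<Longrightarrow> S i = \<zero> \<and> Eh i = \<zero>\<^bsub>M\<^esub>" using Chi by blast
  have nnc: "\<And>i. nn i \<in> carrier R" using \<alpha>c Sc ac unfolding nn_def by simp
  obtain \<sigma> where \<sigma>: "\<sigma> \<in> carrier R" "a \<otimes> (b \<ominus> \<sigma> \<otimes> a) = \<zero>" "(b \<ominus> \<sigma> \<otimes> a) \<otimes> (b \<ominus> \<sigma> \<otimes> a) = \<zero>"
    using decomp[OF ac b ab] by blast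
  define \<nu> where "\<nu> = b \<ominus> \<sigma> \<otimes> a"
  have \<nu>c: "\<nu> \<in> carrier R" using b \<sigma> ac unfolding \<nu>_def by simp
  have \<nu>sq: "\<nu> \<otimes> \<nu> = \<zero>" using \<sigma> unfolding \<nu>_def by simp
  have ex2: "\<exists>t\<in>carrier R. (\<beta> j \<ominus> t \<otimes> b) \<otimes> (\<beta> j \<ominus> t \<otimes> b) = \<zero>" for j
    using decomp[OF b \<beta>c domg'] by blast
  obtain tt where tt: "\<And>j. tt j \<in> carrier R" "\<And>j. (\<beta> j \<ominus> tt j \<otimes> b) \<otimes> (\<beta> j \<ominus> tt j \<otimes> b) = \<zero>"
    using bchoice[of UNIV "\<lambda>j t. t \<in> carrier R \<and> (\<beta> j \<ominus> t \<otimes> b) \<otimes> (\<beta> j \<ominus> t \<otimes> b) = \<zero>"] ex2 by blast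
  define mm where "mm j = \<beta> j \<ominus> tt j \<otimes> b" for j
  have mmc: "\<And>j. mm j \<in> carrier R" using \<beta>c tt b unfolding mm_def by simp
  have mmsq: "\<And>j. mm j \<otimes> mm j = \<zero>" using tt unfolding mm_def by simp
  have K1: "nn i \<otimes> \<beta> j = \<zero>" for i j
  proof -
    have "nn i \<otimes> \<beta> j = tt j \<otimes> (\<sigma> \<otimes> (a \<otimes> nn i)) \<oplus> tt j \<otimes> (nn i \<otimes> \<nu>) \<oplus> nn i \<otimes> mm j"
      unfolding \<nu>_def mm_def using nnc[of i] \<beta>c[of j] tt(1)[of j] \<sigma>(1) ac b by algebra
    also have "\<dots> = \<zero>"
      using an[of i] sqzero_prod[OF nnc \<nu>c nnsq \<nu>sq] sqzero_prod[OF nnc mmc nnsq mmsq] tt(1)[of j] \<sigma>(1) ac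
      by simp
    finally show ?thesis .
  qed
  have K2: "\<And>i e. e \<in> carrier M \<Longrightarrow> nn i \<odot>\<^bsub>M\<^esub> e = \<zero>\<^bsub>M\<^esub>" using sq_kill[OF nnc nnsq] .
  have K3: "\<beta> j \<odot>\<^bsub>M\<^esub> e = (tt j \<otimes> \<sigma>) \<odot>\<^bsub>M\<^esub> (a \<odot>\<^bsub>M\<^esub> e)" if e: "e \<in> carrier M" for j e
  proof -
    have bsplit: "b = \<sigma> \<otimes> a \<oplus> \<nu>" unfolding \<nu>_def using b \<sigma>(1) ac by algebra
    have betasplit: "\<beta> j = tt j \<otimes> b \<oplus> mm j" unfolding mm_def using b tt(1)[of j] \<beta>c[of j] by algebra
    have be: "b \<odot>\<^bsub>M\<^esub> e = \<sigma> \<odot>\<^bsub>M\<^esub> (a \<odot>\<^bsub>M\<^esub> e)"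
    proof -
      have "b \<odot>\<^bsub>M\<^esub> e = (\<sigma> \<otimes> a) \<odot>\<^bsub>M\<^esub> e \<oplus>\<^bsub>M\<^esub> \<nu> \<odot>\<^bsub>M\<^esub> e"
        by (subst bsplit, rule smult_l_distr) (use \<sigma>(1) ac \<nu>c e in auto)
      also have "\<dots> = \<sigma> \<odot>\<^bsub>M\<^esub> (a \<odot>\<^bsub>M\<^esub> e)"
        using sq_kill[OF \<nu>c \<nu>sq e] \<sigma>(1) ac e by (simp add: smult_assoc1)
      finally show ?thesis .
    qed
    have "\<beta> j \<odot>\<^bsub>M\<^esub> e = (tt j \<otimes> b) \<odot>\<^bsub>M\<^esub> e \<oplus>\<^bsub>M\<^esub> mm j \<odot>\<^bsub>M\<^esub> e"
      by (subst betasplit, rule smult_l_distr) (use tt(1) b mmc e in auto)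
    also have "\<dots> = tt j \<odot>\<^bsub>M\<^esub> (\<sigma> \<odot>\<^bsub>M\<^esub> (a \<odot>\<^bsub>M\<^esub> e))"
      using sq_kill[OF mmc mmsq e] tt(1)[of j] b e be \<sigma>(1) ac by (simp add: smult_assoc1)
    also have "\<dots> = (tt j \<otimes> \<sigma>) \<odot>\<^bsub>M\<^esub> (a \<odot>\<^bsub>M\<^esub> e)" using tt(1)[of j] \<sigma>(1) ac e by (simp add: smult_assoc1)
    finally show ?thesis .
  qed
  define sh where "sh i = (S i, Eh i)" for i
  have shc: "\<And>i. sh i \<in> carrier T" using Sc Ehc unfolding sh_def by (simp add: te_carrier)
  have step3: "f i \<otimes>\<^bsub>T\<^esub> g j = (a, \<zero>\<^bsub>M\<^esub>) \<otimes>\<^bsub>T\<^esub> (sh i \<otimes>\<^bsub>T\<^esub> g j)" for i j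
  proof -
    have alsplit: "\<alpha> i = S i \<otimes> a \<oplus> nn i" unfolding nn_def using \<alpha>c[of i] Sc[of i] ac by algebra
    have c1: "\<alpha> i \<otimes> \<beta> j = a \<otimes> (S i \<otimes> \<beta> j)"
    proof -
      have "\<alpha> i \<otimes> \<beta> j = a \<otimes> (S i \<otimes> \<beta> j) \<oplus> nn i \<otimes> \<beta> j"
        unfolding nn_def using \<alpha>c[of i] Sc[of i] ac \<beta>c[of j] by algebra
      thus ?thesis using K1[of i j] ac Sc[of i] \<beta>c[of j] by simp
    qed
    have c2: "\<alpha> i \<odot>\<^bsub>M\<^esub> \<delta> j = a \<odot>\<^bsub>M\<^esub> (S i \<odot>\<^bsub>M\<^esub> \<delta> j)"
    proof -
      have "\<alpha> i \<odot>\<^bsub>M\<^esub> \<delta> j = (S i \<otimes> a) \<odot>\<^bsub>M\<^esub> \<delta> j \<oplus>\<^bsub>M\<^esub> nn i \<odot>\<^bsub>M\<^esub> \<delta> j"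
        by (subst alsplit, rule smult_l_distr) (use Sc ac nnc \<delta>c in auto)
      also have "\<dots> = (S i \<otimes> a) \<odot>\<^bsub>M\<^esub> \<delta> j" using K2[OF \<delta>c] Sc[of i] ac \<delta>c[of j] by simp
      also have "\<dots> = a \<odot>\<^bsub>M\<^esub> (S i \<odot>\<^bsub>M\<^esub> \<delta> j)" using Sc[of i] ac \<delta>c[of j] by (simp add: m_comm smult_assoc1)
      finally show ?thesis .
    qed
    have c3: "\<beta> j \<odot>\<^bsub>M\<^esub> \<epsilon> i = a \<odot>\<^bsub>M\<^esub> (\<beta> j \<odot>\<^bsub>M\<^esub> Eh i)"
    proof -
      have "\<beta> j \<odot>\<^bsub>M\<^esub> \<epsilon> i = (tt j \<otimes> \<sigma>) \<odot>\<^bsub>M\<^esub> ((a \<otimes> a) \<odot>\<^bsub>M\<^esub> Eh i)" using K3[OF \<epsilon>c] aeps by simp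
      also have "\<dots> = a \<odot>\<^bsub>M\<^esub> ((tt j \<otimes> \<sigma>) \<odot>\<^bsub>M\<^esub> (a \<odot>\<^bsub>M\<^esub> Eh i))"
        using tt(1)[of j] \<sigma>(1) ac Ehc[of i] by (simp add: smult_assoc1[symmetric] m_ac)
      also have "\<dots> = a \<odot>\<^bsub>M\<^esub> (\<beta> j \<odot>\<^bsub>M\<^esub> Eh i)" using K3[OF Ehc] by simp
      finally show ?thesis .
    qed
    have "f i \<otimes>\<^bsub>T\<^esub> g j = (\<alpha> i \<otimes> \<beta> j, \<alpha> i \<odot>\<^bsub>M\<^esub> \<delta> j \<oplus>\<^bsub>M\<^esub> \<beta> j \<odot>\<^bsub>M\<^esub> \<epsilon> i)"
      using fe ge by (simp add: te_mult)
    also have "\<dots> = (a \<otimes> (S i \<otimes> \<beta> j), a \<odot>\<^bsub>M\<^esub> (S i \<odot>\<^bsub>M\<^esub> \<delta> j) \<oplus>\<^bsub>M\<^esub> a \<odot>\<^bsub>M\<^esub> (\<beta> j \<odot>\<^bsub>M\<^esub> Eh i))"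
      using c1 c2 c3 by simp
    also have "\<dots> = (a, \<zero>\<^bsub>M\<^esub>) \<otimes>\<^bsub>T\<^esub> (sh i \<otimes>\<^bsub>T\<^esub> g j)"
      using ac Sc[of i] \<beta>c[of j] \<delta>c[of j] Ehc[of i] by (simp add: sh_def ge te_mult smult_r_distr)
    finally show ?thesis .
  qed
  have aT: "(a, \<zero>\<^bsub>M\<^esub>) \<in> carrier T" using ac by (simp add: te_carrier)
  have step4: "conv T f g = (\<lambda>k. (a, \<zero>\<^bsub>M\<^esub>) \<otimes>\<^bsub>T\<^esub> conv T sh g k)"
  proof
    fix k
    have "conv T f g k = finsum T (\<lambda>i. (a, \<zero>\<^bsub>M\<^esub>) \<otimes>\<^bsub>T\<^esub> (sh i \<otimes>\<^bsub>T\<^esub> g (k - i))) {..k}"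
      unfolding conv_def using step3 by simp
    also have "\<dots> = (a, \<zero>\<^bsub>M\<^esub>) \<otimes>\<^bsub>T\<^esub> conv T sh g k"
      unfolding conv_def by (rule T.finsum_rdistr[symmetric]) (use aT shc gc in auto)
    finally show "conv T f g k = (a, \<zero>\<^bsub>M\<^esub>) \<otimes>\<^bsub>T\<^esub> conv T sh g k" .
  qed
  have shz: "\<And>i. Suc (n + p) \<le> i \<Longrightarrow> sh i = \<zero>\<^bsub>T\<^esub>" using Sz unfolding sh_def by (simp add: te_zero)
  have shu: "sh p \<in> Units T"
  proof (rule T.unit_of_inv[OF shc])
    show "(\<one>, \<ominus>\<^bsub>M\<^esub> Eh p) \<in> carrier T" using Ehc by (simp add: te_carrier)
    show "(\<one>, \<ominus>\<^bsub>M\<^esub> Eh p) \<otimes>\<^bsub>T\<^esub> sh p = \<one>\<^bsub>T\<^esub>"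
      using Ehc[of p] Sp by (simp add: sh_def te_mult te_one smult_r_minus M.r_neg)
  qed
  have gj: "g j \<in> cont T (conv T sh g)" by (rule T.mccoy[of sh "Suc (n + p)" p g m, OF shc shz shu gc gz])
  have I: "ideal (cont T (conv T sh g)) T" by (rule T.cont_ideal) (rule T.conv_closed[OF shc gc])
  have "sh i \<otimes>\<^bsub>T\<^esub> g j \<in> cont T (conv T sh g)" by (rule ideal.I_l_closed[OF I gj shc])
  hence "(a, \<zero>\<^bsub>M\<^esub>) \<otimes>\<^bsub>T\<^esub> (sh i \<otimes>\<^bsub>T\<^esub> g j) \<in> cont T (\<lambda>k. (a, \<zero>\<^bsub>M\<^esub>) \<otimes>\<^bsub>T\<^esub> conv T sh g k)"
    by (rule T.cont_mult[OF T.conv_closed[OF shc gc] aT])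
  thus ?thesis using step3 step4 by simp
qed

end


context tsetup begin

lemma gauss_T: "gauss_coeff T"
  unfolding gauss_coeff_def
proof (intro allI impI)
  fix f g n m assume f: "fsupp T f n" and g: "fsupp T g m"
  have fc: "\<And>i. f i \<in> carrier T" and fz: "\<And>i. i \<ge> n \<Longrightarrow> f i = \<zero>\<^bsub>T\<^esub>" using f by (auto simp: fsupp_def)
  have gc: "\<And>i. g i \<in> carrier T" and gz: "\<And>i. i \<ge> m \<Longrightarrow> g i = \<zero>\<^bsub>T\<^esub>" using g by (auto simp: fsupp_def)
  have fst_c: "fst x \<in> carrier R" if "x \<in> carrier T" for x using that by (simp add: te_carrier mem_Times_iff)
  have \<alpha>c: "fst (f i) \<in> carrier R" for i by (rule fst_c[OF fc])
  have \<beta>c: "fst (g j) \<in> carrier R" for j by (rule fst_c[OF gc])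
  have "\<exists>p\<le>n. \<forall>i\<le>n. domi R (fst (f p)) (fst (f i))" by (rule dominant) (rule \<alpha>c)
  then obtain p where p0: "p \<le> n \<and> (\<forall>i\<le>n. domi R (fst (f p)) (fst (f i)))" ..
  hence p: "p \<le> n" "\<forall>i\<le>n. domi R (fst (f p)) (fst (f i))" by simp_all
  have "\<exists>q\<le>m. \<forall>i\<le>m. domi R (fst (g q)) (fst (g i))" by (rule dominant) (rule \<beta>c)
  then obtain q where q0: "q \<le> m \<and> (\<forall>i\<le>m. domi R (fst (g q)) (fst (g i)))" ..
  hence q: "q \<le> m" "\<forall>i\<le>m. domi R (fst (g q)) (fst (g i))" by simp_all
  have domf: "domi R (fst (f p)) (fst (f i))" for i
  proof (cases "i \<le> n")
    case True thus ?thesis using p by simp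
  next
    case False hence "f i = \<zero>\<^bsub>T\<^esub>" using fz by simp
    hence "fst (f i) = \<zero>" by (simp add: te_zero)
    thus ?thesis using domi_zero[OF \<alpha>c[of p]] by simp
  qed
  have domg: "domi R (fst (g q)) (fst (g j))" for j
  proof (cases "j \<le> m")
    case True thus ?thesis using q by simp
  next
    case False hence "g j = \<zero>\<^bsub>T\<^esub>" using gz by simp
    hence "fst (g j) = \<zero>" by (simp add: te_zero)
    thus ?thesis using domi_zero[OF \<beta>c[of q]] by simp
  qed
  have prods: "f i \<otimes>\<^bsub>T\<^esub> g j \<in> cont T (conv T f g)" for i j
  proof -
    from T1[OF \<alpha>c[of p] \<beta>c[of q]] show ?thesis
    proof
      assume ab: "domi R (fst (f p)) (fst (g q))"
      show ?thesis by (rule core[OF f g refl domf \<beta>c domg ab])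
    next
      assume ba: "domi R (fst (g q)) (fst (f p))"
      have "g j \<otimes>\<^bsub>T\<^esub> f i \<in> cont T (conv T g f)" by (rule core[OF g f refl domg \<alpha>c domf ba])
      moreover have "conv T g f = conv T f g"
      proof
        fix k show "conv T g f k = conv T f g k" by (rule T.conv_comm) (rule gc, rule fc)
      qed
      moreover have "g j \<otimes>\<^bsub>T\<^esub> f i = f i \<otimes>\<^bsub>T\<^esub> g j" by (rule T.m_comm[OF gc fc])
      ultimately show ?thesis by simp
    qed
  qed
  have I: "ideal (cont T (conv T f g)) T" by (rule T.cont_ideal) (rule T.conv_closed[OF fc gc])
  have "cont T f \<cdot>\<^bsub>T\<^esub> cont T g \<subseteq> cont T (conv T f g)"
    unfolding cont_def[of T f] cont_def[of T g]
  proof (rule T.ideal_prod_genideal_subset[OF _ _ I])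
    show "range f \<subseteq> carrier T" using fc by blast
    show "range g \<subseteq> carrier T" using gc by blast
    fix x y assume "x \<in> range f" "y \<in> range g"
    then obtain i j where "x = f i" "y = g j" by blast
    thus "x \<otimes>\<^bsub>T\<^esub> y \<in> cont T (conv T f g)" using prods by simp
  qed
  moreover have "cont T (conv T f g) \<subseteq> cont T f \<cdot>\<^bsub>T\<^esub> cont T g" by (rule T.cont_conv_subset) (rule fc, rule gc)
  ultimately show "cont T (conv T f g) = cont T f \<cdot>\<^bsub>T\<^esub> cont T g" by (rule subset_antisym[rotated])
qed

end

theorem proposition2p1:
  fixes A :: "('a, 'c) ring_scheme" and E :: "('a, 'b) module"
  assumes "local_ring A"
    and "module A E"
    and "carrier E \<noteq> {\<zero>\<^bsub>E\<^esub>}"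
  shows "gaussian (triv_ext A E) \<longleftrightarrow>
           gaussian A \<and> (\<forall>a \<in> carrier A. smult_module E a = smult_module E (a \<otimes>\<^bsub>A\<^esub> a))"
proof -
  interpret temod A E unfolding temod_def by (rule assms(2))
  have L: "\<exists>!M. maximalideal M A" using assms(1) unfolding local_ring_def by (rule conjunct2)
  show ?thesis
  proof
    assume GT: "gaussian (triv_ext A E)"
    have GT': "gauss_coeff (triv_ext A E)" using GT by (simp only: T.gaussian_iff_coeff)
    have "gauss_coeff A" by (rule gauss_T_imp_R[OF GT'])
    hence GA: "gaussian A" by (simp only: R.gaussian_iff_coeff)
    have SQ: "\<forall>a \<in> carrier A. smult_module E a = smult_module E (a \<otimes>\<^bsub>A\<^esub> a)"
    proof
      fix a assume "a \<in> carrier A" thus "smult_module E a = smult_module E (a \<otimes>\<^bsub>A\<^esub> a)" by (rule gauss_T_imp_sq[OF GT'])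
    qed
    show "gaussian A \<and> (\<forall>a \<in> carrier A. smult_module E a = smult_module E (a \<otimes>\<^bsub>A\<^esub> a))"
      using GA SQ by (rule conjI)
  next
    assume H: "gaussian A \<and> (\<forall>a \<in> carrier A. smult_module E a = smult_module E (a \<otimes>\<^bsub>A\<^esub> a))"
    have GA: "gauss_coeff A" using conjunct1[OF H] by (simp only: R.gaussian_iff_coeff)
    have SQ: "\<And>a. a \<in> carrier A \<Longrightarrow> smult_module E a = smult_module E (a \<otimes>\<^bsub>A\<^esub> a)"
      using conjunct2[OF H] by blast
    have gl: "gloc A"
      by (rule gloc.intro, rule gcr.intro, rule R.is_cring, rule gcr_axioms.intro, rule GA, rule gloc_axioms.intro, rule L)
    have ts: "tsetup A E"
      by (rule tsetup.intro, rule temod_axioms, rule gl, rule tsetup_axioms.intro, rule SQ)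
    have "gauss_coeff (triv_ext A E)" by (rule tsetup.gauss_T[OF ts])
    thus "gaussian (triv_ext A E)" by (simp only: T.gaussian_iff_coeff)
  qed
qed


end
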